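(* Suppose $\alpha_s=s^{-\eta}$ for some $\eta\in[0,1/2)$. Then, with probability $1$, there exist a constant $K>0$ and a (random) time $T_0$ such that for all $t\ge T_0$, \[ \lambda_{\min}(t)\ge K\sum_{s=1}^t\alpha_s^2, \] i.e. $\lambda_{\min}(t)=\Omega\big(\sum_{s=1}^t\alpha_s^2\big)$.
   Context: At each time $s$, the input is $\mathbf x_s=(\mathbf p_s,\mathbf c_s)\in\mathbb R^d$ with $\mathbf p_s=\bar{\mathbf p}_s+\alpha_s\mathbf u_s\in\mathbb R^m$, where: the contexts $\mathbf c_s\in\mathbb R^{d-m}$ are i.i.d., bounded, with $\Sigma^c=\mathbb E[\mathbf c_s\mathbf c_s^\top]$ positive definite; $\bar{\mathbf p}_s$ (the certainty-equivalent price $\mathbf p_{ce}(\mathbf c_s;\hat{\boldsymbol\beta}_{s-1})$) is a bounded random vector determined by $\mathbf c_s$ and the past; the perturbations $\mathbf u_s\in\mathbb R^m$ are i.i.d., bounded, mean zero, with positive definite covariance, and $\mathbf u_s$ is independent of $\mathbf c_s$ and of everything up to time $s-1$; $\alpha_s>0$ is deterministic. $\lambda_{\min}(t)$ is the minimum eigenvalue of $\sum_{s=1}^t\mathbf x_s\mathbf x_s^\top$. *)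

theory Defs
  imports "HOL-Probability.Probability"
begin

definition outer :: "real ^ 'n \<Rightarrow> real ^ 'n ^ 'n" where
  "outer x = (\<chi> i j. x $ i * x $ j)"

definition min_eig :: "real ^ 'n ^ 'n \<Rightarrow> real" where
  "min_eig A = Min {l. \<exists>v. v \<noteq> 0 \<and> A *v v = l *\<^sub>R v}"

definition pos_def :: "real ^ 'n ^ 'n \<Rightarrow> bool" where
  "pos_def A \<longleftrightarrow> transpose A = A \<and> (\<forall>v. v \<noteq> 0 \<longrightarrow> v \<bullet> (A *v v) > 0)"

definition stack :: "real ^ 'm \<Rightarrow> real ^ 'k \<Rightarrow> real ^ ('m + 'k)" where
  "stack p c = (\<chi> i. case i of Inl j \<Rightarrow> p $ j | Inr j \<Rightarrow> c $ j)"

definition past_ctx :: "'a measure \<Rightarrow> (nat \<Rightarrow> 'a measure) \<Rightarrow> (nat \<Rightarrow> 'a \<Rightarrow> real ^ 'k) \<Rightarrow> nat \<Rightarrow> 'a measure" where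
  "past_ctx M F c s = sigma (space M)
     (sets (F (s - 1)) \<union> {c s -` A \<inter> space M | A. A \<in> sets borel})"

definition gen_sets :: "'a measure \<Rightarrow> ('a \<Rightarrow> 'b::topological_space) \<Rightarrow> 'a set set" where
  "gen_sets M X = {X -` A \<inter> space M | A. A \<in> sets borel}"

end

theory Submission
  imports Defs
begin

lemma sym_inner:
  fixes A :: "real^'n^'n"
  assumes "transpose A = A"
  shows "(A *v v) \<bullet> w = v \<bullet> (A *v w)"
proof -
  have "(A *v v) \<bullet> w = (v v* transpose A) \<bullet> w"
    by (metis transpose_matrix_vector transpose_transpose)
  also have "\<dots> = v \<bullet> (transpose A *v w)" by (rule dot_lmul_matrix)
  finally show ?thesis using assms by simp
qed

lemma quad_cont: "continuous_on S (\<lambda>v. v \<bullet> ((A::real^'n^'n) *v v))"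
  by (intro continuous_intros linear_continuous_on matrix_vector_mul_linear)

lemma psd_zero:
  fixes B :: "real^'n^'n"
  assumes sym: "transpose B = B" and psd: "\<And>v. v \<bullet> (B *v v) \<ge> 0" and z: "x \<bullet> (B *v x) = 0"
  shows "B *v x = 0"
proof -
  let ?w = "B *v x"
  have "\<forall>t::real. 0 \<le> 2 * t * (?w \<bullet> ?w) + t^2 * (?w \<bullet> (B *v ?w))"
  proof
    fix t :: real
    have "(x + t *\<^sub>R ?w) \<bullet> (B *v (x + t *\<^sub>R ?w)) = x \<bullet> (B *v x) + t * (x \<bullet> (B *v ?w)) + t * (?w \<bullet> (B *v x)) + t^2 * (?w \<bullet> (B *v ?w))"
      by (simp add: matrix_vector_right_distrib matrix_vector_mult_scaleR inner_add_left inner_add_right power2_eq_square algebra_simps)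
    also have "x \<bullet> (B *v ?w) = ?w \<bullet> ?w" using sym_inner[OF sym, of x ?w] by (simp add: inner_commute)
    finally show "0 \<le> 2 * t * (?w \<bullet> ?w) + t^2 * (?w \<bullet> (B *v ?w))"
      using psd[of "x + t *\<^sub>R ?w"] z by (simp add: inner_commute)
  qed
  moreover
  { assume ne: "?w \<bullet> ?w > 0"
    define c where "c = ?w \<bullet> (B *v ?w)"
    have c0: "c \<ge> 0" using psd c_def by auto
    define t where "t = - (?w \<bullet> ?w) / (c + 1)"
    have "0 \<le> 2 * t * (?w \<bullet> ?w) + t^2 * c" using calculation c_def by auto
    moreover have "2 * t * (?w \<bullet> ?w) + t^2 * c < 0"
    proof -
      have tn: "t < 0" using ne c0 by (simp add: t_def)
      have "t^2 * c \<le> t^2 * (c+1)" by (simp add: mult_left_mono)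
      also have "t^2 * (c+1) = - t * (?w \<bullet> ?w)"
      proof -
        have tc: "t * (c+1) = - (?w \<bullet> ?w)" using c0 by (simp add: t_def)
        have "t^2 * (c+1) = t * (t * (c+1))" by (simp add: power2_eq_square)
        then show ?thesis using tc by simp
      qed
      finally have "2 * t * (?w \<bullet> ?w) + t^2 * c \<le> t * (?w \<bullet> ?w)" by linarith
      also have "\<dots> < 0" using tn ne by (simp add: mult_neg_pos)
      finally show ?thesis .
    qed
    ultimately have False by linarith }
  ultimately show ?thesis by (metis inner_gt_zero_iff)
qed

lemma sym_has_eig:
  fixes A :: "real^'n^'n"
  assumes sym: "transpose A = A"
  shows "\<exists>l v. v \<noteq> 0 \<and> A *v v = l *\<^sub>R v"
proof -
  obtain x where x: "x \<in> sphere 0 1" and mn: "\<forall>y\<in>sphere 0 1. x \<bullet> (A *v x) \<le> y \<bullet> (A *v y)"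
    using continuous_attains_inf[OF compact_sphere _ quad_cont, of 0 1 A] by auto
  define l where "l = x \<bullet> (A *v x)"
  define B where "B = A - l *\<^sub>R mat 1"
  have Bv: "B *v v = A *v v - l *\<^sub>R v" for v
    by (simp add: B_def matrix_vector_mult_diff_rdistrib scaleR_matrix_vector_assoc[symmetric])
  have symB: "transpose B = B" using sym by (simp add: B_def transpose_def mat_def vec_eq_iff)
  have nx: "x \<bullet> x = 1" using x by (simp add: dot_square_norm)
  have psd: "v \<bullet> (B *v v) \<ge> 0" for v
  proof (cases "v = 0")
    case False
    let ?y = "(1 / norm v) *\<^sub>R v"
    have "?y \<in> sphere 0 1" using False by simp
    then have "l \<le> ?y \<bullet> (A *v ?y)" using mn l_def by blast
    also have "\<dots> = (v \<bullet> (A *v v)) / (norm v)^2"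
      by (simp add: matrix_scaleR_vector_ac scaleR_matrix_vector_assoc[symmetric] power2_eq_square)
    finally have "l * (norm v)^2 \<le> v \<bullet> (A *v v)" using False by (simp add: field_simps)
    then show ?thesis by (simp add: Bv inner_diff_right dot_square_norm)
  qed simp
  have "x \<bullet> (B *v x) = 0" by (simp add: Bv inner_diff_right nx l_def)
  then have "B *v x = 0" using psd_zero[OF symB psd] by blast
  then have "A *v x = l *\<^sub>R x" by (simp add: Bv)
  moreover have "x \<noteq> 0" using x by auto
  ultimately show ?thesis by blast
qed

lemma min_eig_ge:
  fixes A :: "real^'n^'n"
  assumes sym: "transpose A = A" and q: "\<And>v. v \<bullet> (A *v v) \<ge> K * (v \<bullet> v)"
  shows "min_eig A \<ge> K"
proof -
  let ?E = "{l. \<exists>v. v \<noteq> 0 \<and> A *v v = l *\<^sub>R v}"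
  have ne: "?E \<noteq> {}" using sym_has_eig[OF sym] by auto
  define f where "f l = (SOME v. v \<noteq> 0 \<and> A *v v = l *\<^sub>R v)" for l
  have f: "f l \<noteq> 0 \<and> A *v f l = l *\<^sub>R f l" if "l \<in> ?E" for l
    using that someI_ex[where P="\<lambda>v. v \<noteq> 0 \<and> A *v v = l *\<^sub>R v"] unfolding f_def by blast
  have inj: "inj_on f ?E"
  proof (rule inj_onI)
    fix a b assume a: "a \<in> ?E" and b: "b \<in> ?E" and e: "f a = f b"
    have "a *\<^sub>R f a = b *\<^sub>R f a" using f[OF a] f[OF b] e by metis
    then show "a = b" using f[OF a] by (simp add: scaleR_cancel_right)
  qed
  have orth: "pairwise orthogonal (f ` ?E)"
  proof (rule pairwiseI)
    fix x y assume "x \<in> f ` ?E" "y \<in> f ` ?E" "x \<noteq> y"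
    then obtain a b where a: "a \<in> ?E" and b: "b \<in> ?E" and xa: "x = f a" and yb: "y = f b" and ab: "a \<noteq> b"
      by auto
    have "(A *v x) \<bullet> y = x \<bullet> (A *v y)" by (rule sym_inner[OF sym])
    then have "a * (x \<bullet> y) = b * (x \<bullet> y)" using f[OF a] f[OF b] xa yb by simp
    then show "orthogonal x y" using ab by (simp add: orthogonal_def)
  qed
  have fin: "finite ?E"
    using pairwise_orthogonal_imp_finite[OF orth] finite_image_iff[OF inj] by simp
  have ge: "l \<ge> K" if "l \<in> ?E" for l
  proof -
    from that obtain v where v: "v \<noteq> 0" "A *v v = l *\<^sub>R v" by blast
    have "K * (v \<bullet> v) \<le> l * (v \<bullet> v)" using q[of v] v by simp
    then show ?thesis using v by simp
  qed
  show ?thesis unfolding min_eig_def using fin ne ge by simp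
qed

lemma meas_lift:
  assumes "space A = space B" "sets A \<subseteq> sets B" "f \<in> measurable A N"
  shows "f \<in> measurable B N"
  using assms unfolding measurable_def by auto

lemma (in prob_space) indep_prod:
  fixes X :: "'a \<Rightarrow> real" and Z :: "'a \<Rightarrow> 'b::topological_space" and f :: "'b \<Rightarrow> real"
  assumes ind: "indep_set (sets N) (gen_sets M Z)"
    and sp: "space N = space M"
    and XN: "X \<in> borel_measurable N" and XM: "X \<in> borel_measurable M"
    and Zm: "Z \<in> borel_measurable M" and fm: "f \<in> borel_measurable borel"
    and Xint: "integrable M X" and fint: "integrable M (\<lambda>\<omega>. f (Z \<omega>))"
  shows "expectation (\<lambda>\<omega>. X \<omega> * f (Z \<omega>)) = expectation X * expectation (\<lambda>\<omega>. f (Z \<omega>))"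
proof -
  have "indep_var borel X borel (\<lambda>\<omega>. f (Z \<omega>))"
    unfolding indep_var_def indep_vars_def2
  proof (intro conjI ballI)
    fix i assume "i \<in> (UNIV::bool set)" show "random_variable (case_bool borel borel i) (case_bool X (\<lambda>\<omega>. f (Z \<omega>)) i)"
      using XM measurable_compose[OF Zm fm] by (cases i) simp_all
  next
    have ind': "indep_sets (case_bool (sets N) (gen_sets M Z)) UNIV"
      using ind unfolding indep_set_def .
    have incT: "{X -` A \<inter> space M | A. A \<in> sets borel} \<subseteq> sets N"
    proof
      fix B assume "B \<in> {X -` A \<inter> space M | A. A \<in> sets borel}"
      then obtain A where B: "B = X -` A \<inter> space M" and A: "A \<in> sets borel" by blast
      show "B \<in> sets N" using measurable_sets[OF XN A] sp B by simp
    qed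
    have incF: "{(\<lambda>\<omega>. f (Z \<omega>)) -` A \<inter> space M | A. A \<in> sets borel} \<subseteq> gen_sets M Z"
    proof
      fix B assume "B \<in> {(\<lambda>\<omega>. f (Z \<omega>)) -` A \<inter> space M | A. A \<in> sets borel}"
      then obtain A where B: "B = (\<lambda>\<omega>. f (Z \<omega>)) -` A \<inter> space M" and A: "A \<in> sets borel" by blast
      have fA: "f -` A \<in> sets borel" using measurable_sets[OF fm A] by simp
      have "B = Z -` (f -` A) \<inter> space M" using B by auto
      then show "B \<in> gen_sets M Z" unfolding gen_sets_def using fA by blast
    qed
    show "indep_sets (\<lambda>i. {case_bool X (\<lambda>\<omega>. f (Z \<omega>)) i -` A \<inter> space M |A. A \<in> sets (case_bool borel borel i)}) UNIV"
      apply (rule indep_sets_mono_sets[OF ind'])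
      subgoal for i using incT incF by (cases i) simp_all
      done
  qed
  then show ?thesis by (rule indep_var_lebesgue_integral[OF _ Xint fint])
qed

lemma pd_bound:
  fixes A :: "real^'n^'n"
  assumes "pos_def A"
  shows "\<exists>l>0. \<forall>w. w \<bullet> (A *v w) \<ge> l * (w \<bullet> w)"
proof -
  have cont: "continuous_on (sphere 0 1) (\<lambda>v. v \<bullet> (A *v v))"
    by (intro continuous_intros linear_continuous_on matrix_vector_mul_linear)
  obtain x where x: "x \<in> sphere 0 1" and mn: "\<forall>y\<in>sphere 0 1. x \<bullet> (A *v x) \<le> y \<bullet> (A *v y)"
    using continuous_attains_inf[OF compact_sphere _ cont] by auto
  define l where "l = x \<bullet> (A *v x)"
  have "x \<noteq> 0" using x by auto
  then have l0: "l > 0" using assms unfolding pos_def_def l_def by auto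
  have "w \<bullet> (A *v w) \<ge> l * (w \<bullet> w)" for w
  proof (cases "w = 0")
    case False
    let ?y = "(1 / norm w) *\<^sub>R w"
    have "?y \<in> sphere 0 1" using False by simp
    then have "l \<le> ?y \<bullet> (A *v ?y)" using mn l_def by blast
    also have "\<dots> = (w \<bullet> (A *v w)) / (norm w)^2"
      by (simp add: matrix_scaleR_vector_ac scaleR_matrix_vector_assoc[symmetric] power2_eq_square)
    finally have "l * (norm w)^2 \<le> w \<bullet> (A *v w)" using False by (simp add: field_simps)
    then show ?thesis by (simp add: dot_square_norm)
  qed simp
  then show ?thesis using l0 by blast
qed

lemma pos_def_nonzero: "pos_def A \<Longrightarrow> A \<noteq> (0::real^'n^'n)"
proof
  assume "pos_def A" "A = 0"
  have "(1::real^'n) \<noteq> 0" by (simp add: vec_eq_iff)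
  then show False using \<open>pos_def A\<close> \<open>A = 0\<close> unfolding pos_def_def by auto
qed

lemma (in prob_space) pd_integrable:
  fixes f :: "'a \<Rightarrow> real^'n^'n"
  assumes "pos_def (expectation f)"
  shows "integrable M f"
  using pos_def_nonzero[OF assms] not_integrable_integral_eq by blast

lemma (in prob_space) exp_entry:
  fixes f :: "'a \<Rightarrow> real^'n^'n"
  assumes "integrable M f"
  shows "expectation f $ i $ j = expectation (\<lambda>\<omega>. f \<omega> $ i $ j)"
proof -
  have bl: "bounded_linear (\<lambda>A::real^'n^'n. A $ i $ j)"
    by (rule bounded_linear_compose[OF bounded_linear_vec_nth bounded_linear_vec_nth])
  show ?thesis using integral_bounded_linear[OF bl assms] by simp
qed

lemma (in prob_space) exp_comp:
  fixes f :: "'a \<Rightarrow> real^'n"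
  assumes "integrable M f"
  shows "expectation f $ i = expectation (\<lambda>\<omega>. f \<omega> $ i)"
  using integral_bounded_linear[OF bounded_linear_vec_nth assms] by simp

lemma pw4:
  fixes S d b :: real
  assumes "\<bar>d\<bar> \<le> b"
  shows "(S + d)^4 \<le> S^4 + 4 * (S^3 * d) + 8 * b^2 * S^2 + 3 * b^4"
proof -
  have d2: "d^2 \<le> b^2" using assms by (metis abs_ge_zero power2_abs power_mono)
  have e: "(S + d)^4 = S^4 + 4 * (S^3 * d) + 6 * (S^2 * d^2) + 4 * (S * d^3) + d^4"
    by (simp add: power2_eq_square power3_eq_cube power4_eq_xxxx algebra_simps)
  have a: "S^2 * d^2 \<le> S^2 * b^2" using d2 by (simp add: mult_left_mono)
  have "\<bar>S * d\<bar> \<le> (S^2 + d^2)/2"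
  proof -
    have "0 \<le> (\<bar>S\<bar> - \<bar>d\<bar>) * (\<bar>S\<bar> - \<bar>d\<bar>)" by simp
    moreover have "\<bar>S\<bar> * \<bar>S\<bar> = S * S" "\<bar>d\<bar> * \<bar>d\<bar> = d * d" by simp_all
    ultimately show ?thesis by (simp add: power2_eq_square abs_mult algebra_simps)
  qed
  then have "\<bar>S * d\<bar> * d^2 \<le> (S^2 + d^2)/2 * d^2" by (rule mult_right_mono) simp
  moreover have "S * d^3 \<le> \<bar>S * d\<bar> * d^2"
  proof -
    have "S * d^3 = (S * d) * d^2" by (simp add: power2_eq_square power3_eq_cube)
    also have "\<dots> \<le> \<bar>S * d\<bar> * d^2" by (rule mult_right_mono) auto
    finally show ?thesis .
  qed
  moreover have "(S^2 + d^2)/2 * d^2 \<le> (S^2 + b^2)/2 * b^2"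
    by (rule mult_mono) (use d2 in auto)
  ultimately have c: "S * d^3 \<le> (S^2 * b^2 + b^4)/2" by (simp add: power4_eq_xxxx power2_eq_square algebra_simps)
  have "d^4 = (d^2)^2" by simp
  also have "\<dots> \<le> (b^2)^2" by (rule power_mono[OF d2]) simp
  finally have d4: "d^4 \<le> b^4" by simp
  show ?thesis unfolding e using a c d4 by (simp add: algebra_simps)
qed

lemma pw2:
  fixes S d b :: real
  assumes "\<bar>d\<bar> \<le> b"
  shows "(S + d)^2 \<le> S^2 + 2 * (S * d) + b^2"
proof -
  have d2: "d^2 \<le> b^2" using assms by (metis abs_ge_zero power2_abs power_mono)
  then show ?thesis by (simp add: power2_eq_square algebra_simps)
qed

lemma (in prob_space) fourth_moment:
  fixes D :: "nat \<Rightarrow> 'a \<Rightarrow> real" and H :: "nat \<Rightarrow> 'a measure" and b :: "nat \<Rightarrow> real"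
  assumes meas: "\<And>s. D s \<in> borel_measurable M"
    and bnd: "\<And>s \<omega>. \<omega> \<in> space M \<Longrightarrow> \<bar>D s \<omega>\<bar> \<le> b s"
    and Hm: "\<And>r s. 1 \<le> r \<Longrightarrow> r < s \<Longrightarrow> D r \<in> borel_measurable (H s)"
    and orth: "\<And>s g. 1 \<le> s \<Longrightarrow> g \<in> borel_measurable (H s) \<Longrightarrow> (\<exists>B. \<forall>\<omega>\<in>space M. \<bar>g \<omega>\<bar> \<le> B) \<Longrightarrow>
                  expectation (\<lambda>\<omega>. g \<omega> * D s \<omega>) = 0"
  shows "expectation (\<lambda>\<omega>. (\<Sum>s\<in>{1..t}. D s \<omega>)^2) \<le> (\<Sum>s\<in>{1..t}. (b s)^2)
       \<and> expectation (\<lambda>\<omega>. (\<Sum>s\<in>{1..t}. D s \<omega>)^4) \<le> 11 * (\<Sum>s\<in>{1..t}. (b s)^2)^2"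
proof (induction t)
  case 0
  then show ?case by simp
next
  case (Suc t)
  define S where "S \<omega> = (\<Sum>s\<in>{1..t}. D s \<omega>)" for \<omega>
  define B where "B = (\<Sum>s\<in>{1..t}. (b s)^2)"
  have Bnn: "B \<ge> 0" unfolding B_def by (auto intro: sum_nonneg)
  have b0: "b s \<ge> 0" for s proof -
    obtain \<omega> where "\<omega> \<in> space M" using not_empty by blast
    then show ?thesis using bnd[of \<omega> s] by (meson abs_ge_zero order_trans)
  qed
  have split: "(\<Sum>s\<in>{1..Suc t}. f s) = (\<Sum>s\<in>{1..t}. f s) + f (Suc t)" for f :: "nat \<Rightarrow> real"
    by (simp add: sum.cl_ivl_Suc)
  have Smeas: "S \<in> borel_measurable M" unfolding S_def using meas by measurable
  have SH: "S \<in> borel_measurable (H (Suc t))" unfolding S_def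
    by (intro borel_measurable_sum) (use Hm in auto)
  have Sb: "\<bar>S \<omega>\<bar> \<le> (\<Sum>s\<in>{1..t}. b s)" if "\<omega> \<in> space M" for \<omega>
    unfolding S_def by (rule order_trans[OF sum_abs sum_mono]) (use bnd that in auto)
  have intb: "integrable M f" if "f \<in> borel_measurable M" "\<And>\<omega>. \<omega> \<in> space M \<Longrightarrow> \<bar>f \<omega>\<bar> \<le> C" for f and C :: real
    using that by (intro integrable_const_bound[where B=C]) auto
  have IH2: "expectation (\<lambda>\<omega>. (S \<omega>)^2) \<le> B" and IH4: "expectation (\<lambda>\<omega>. (S \<omega>)^4) \<le> 11 * B^2"
    using Suc.IH unfolding S_def B_def by auto
  let ?d = "D (Suc t)" and ?c = "b (Suc t)"
  let ?C = "(\<Sum>s\<in>{1..t}. b s)"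
  have Sb4: "\<bar>(S \<omega>)^4\<bar> \<le> ?C^4" if "\<omega> \<in> space M" for \<omega>
    using power_mono[OF Sb[OF that], of 4] by (simp add: power_abs)
  have Sb2: "\<bar>(S \<omega>)^2\<bar> \<le> ?C^2" if "\<omega> \<in> space M" for \<omega>
    using power_mono[OF Sb[OF that], of 2] by (simp add: power_abs)
  have Sb3: "\<bar>(S \<omega>)^3\<bar> \<le> ?C^3" if "\<omega> \<in> space M" for \<omega>
    using power_mono[OF Sb[OF that], of 3] by (simp add: power_abs)
  have i_S2: "integrable M (\<lambda>\<omega>. (S \<omega>)^2)"
    by (rule intb[of _ "?C^2"]) (use Smeas Sb2 in auto)
  have i_S4: "integrable M (\<lambda>\<omega>. (S \<omega>)^4)"
    by (rule intb[of _ "?C^4"]) (use Smeas Sb4 in auto)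
  have C0: "?C \<ge> 0" using b0 by (simp add: sum_nonneg)
  have i_SD: "integrable M (\<lambda>\<omega>. S \<omega> * ?d \<omega>)"
    by (rule intb[of _ "?C * ?c"]) (use Smeas meas Sb bnd C0 in \<open>auto simp: abs_mult intro!: mult_mono\<close>)
  have i_S3D: "integrable M (\<lambda>\<omega>. (S \<omega>)^3 * ?d \<omega>)"
    by (rule intb[of _ "?C^3 * ?c"]) (use Smeas meas Sb3 bnd C0 in \<open>auto simp: abs_mult intro!: mult_mono\<close>)
  have o1: "expectation (\<lambda>\<omega>. S \<omega> * ?d \<omega>) = 0"
    by (rule orth) (use SH Sb in auto)
  have o3: "expectation (\<lambda>\<omega>. (S \<omega>)^3 * ?d \<omega>) = 0"
    by (rule orth) (use SH Sb3 in auto)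
  have Sdb: "\<bar>S \<omega> + ?d \<omega>\<bar> \<le> ?C + ?c" if "\<omega> \<in> space M" for \<omega>
    using Sb[OF that] bnd[OF that, of "Suc t"] by linarith
  have i_Sd2: "integrable M (\<lambda>\<omega>. (S \<omega> + ?d \<omega>)^2)"
    by (rule intb[of _ "(?C + ?c)^2"]) (use Smeas meas power_mono[OF Sdb, of _ 2] in \<open>auto simp: power_abs\<close>)
  have i_Sd4: "integrable M (\<lambda>\<omega>. (S \<omega> + ?d \<omega>)^4)"
    by (rule intb[of _ "(?C + ?c)^4"]) (use Smeas meas power_mono[OF Sdb, of _ 4] in \<open>auto simp: power_abs\<close>)
  have e2: "expectation (\<lambda>\<omega>. (S \<omega> + ?d \<omega>)^2) \<le> expectation (\<lambda>\<omega>. (S \<omega>)^2 + 2 * (S \<omega> * ?d \<omega>) + ?c^2)"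
  proof (rule integral_mono)
    show "integrable M (\<lambda>\<omega>. (S \<omega>)^2 + 2 * (S \<omega> * ?d \<omega>) + ?c^2)"
      by (intro Bochner_Integration.integrable_add integrable_mult_right i_S2 i_SD integrable_const)
  qed (use i_Sd2 pw2 bnd in auto)
  also have "\<dots> = expectation (\<lambda>\<omega>. (S \<omega>)^2) + ?c^2"
    using i_S2 i_SD o1 by (simp add: prob_space)
  finally have E2: "expectation (\<lambda>\<omega>. (S \<omega> + ?d \<omega>)^2) \<le> B + ?c^2" using IH2 by linarith
  have e4: "expectation (\<lambda>\<omega>. (S \<omega> + ?d \<omega>)^4) \<le> expectation (\<lambda>\<omega>. (S \<omega>)^4 + 4 * ((S \<omega>)^3 * ?d \<omega>) + 8 * ?c^2 * (S \<omega>)^2 + 3 * ?c^4)"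
  proof (rule integral_mono)
    show "integrable M (\<lambda>\<omega>. (S \<omega>)^4 + 4 * ((S \<omega>)^3 * ?d \<omega>) + 8 * ?c^2 * (S \<omega>)^2 + 3 * ?c^4)"
      by (intro Bochner_Integration.integrable_add integrable_mult_right i_S2 i_S4 i_S3D integrable_const)
  qed (use i_Sd4 pw4 bnd in auto)
  also have "\<dots> = expectation (\<lambda>\<omega>. (S \<omega>)^4) + 8 * ?c^2 * expectation (\<lambda>\<omega>. (S \<omega>)^2) + 3 * ?c^4"
    using i_S2 i_S4 i_S3D o3 by (simp add: prob_space)
  also have "\<dots> \<le> 11 * B^2 + 8 * ?c^2 * B + 3 * ?c^4"
    using IH2 IH4 by (intro add_mono mult_left_mono) auto
  also have "\<dots> \<le> 11 * (B + ?c^2)^2"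
  proof -
    have "0 \<le> B * ?c^2" "0 \<le> ?c^4" using Bnn by simp_all
    then show ?thesis by (simp add: power2_eq_square power4_eq_xxxx algebra_simps)
  qed
  finally have E4: "expectation (\<lambda>\<omega>. (S \<omega> + ?d \<omega>)^4) \<le> 11 * (B + ?c^2)^2" .
  show ?case using E2 E4 unfolding split S_def B_def by simp
qed

lemma (in prob_space) bc_fourth:
  fixes S :: "nat \<Rightarrow> 'a \<Rightarrow> real"
  assumes meas: "\<And>k. S k \<in> borel_measurable M"
    and int: "\<And>k. integrable M (\<lambda>\<omega>. (S k \<omega>)^4)"
    and mom: "\<And>k. expectation (\<lambda>\<omega>. (S k \<omega>)^4) \<le> C * (w k)^2"
    and wpos: "\<And>k. w k > 0"
    and summ: "summable (\<lambda>k. 1 / (w k)^2)"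
    and ep: "\<epsilon> > 0"
  shows "AE \<omega> in M. eventually (\<lambda>k. \<bar>S k \<omega>\<bar> < \<epsilon> * w k) sequentially"
proof -
  define A where "A k = {\<omega>\<in>space M. (\<epsilon> * w k)^4 \<le> (S k \<omega>)^4}" for k
  have Am: "A k \<in> sets M" for k unfolding A_def using meas by measurable
  have mA: "measure M (A k) \<le> (C / \<epsilon>^4) * (1 / (w k)^2)" for k
  proof -
    have pos: "0 < (\<epsilon> * w k)^4" using ep wpos[of k] by simp
    have "measure M (A k) \<le> expectation (\<lambda>\<omega>. (S k \<omega>)^4) / (\<epsilon> * w k)^4"
      unfolding A_def by (rule integral_Markov_inequality_measure[OF int]) (use pos in auto)
    also have "\<dots> \<le> C * (w k)^2 / (\<epsilon> * w k)^4"
      by (rule divide_right_mono[OF mom]) (use pos in simp)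
    also have "\<dots> = (C / \<epsilon>^4) * (1 / (w k)^2)"
      using wpos[of k] ep by (simp add: field_simps power2_eq_square power4_eq_xxxx)
    finally show ?thesis .
  qed
  have summA: "summable (\<lambda>k. measure M (A k))"
  proof (rule summable_comparison_test[OF _ summable_mult[OF summ, of "C / \<epsilon>^4"]])
    show "\<exists>N. \<forall>n\<ge>N. norm (measure M (A n)) \<le> C / \<epsilon> ^ 4 * (1 / (w n)\<^sup>2)"
      using mA by auto
  qed
  have "AE x in M. eventually (\<lambda>n. x \<in> space M - A n) sequentially"
    by (rule borel_cantelli_AE1[OF Am]) (use summA in \<open>auto simp: emeasure_eq_measure\<close>)
  then show ?thesis
  proof (rule AE_mp, intro AE_I2 impI)
    fix x assume x: "x \<in> space M" and ev: "eventually (\<lambda>n. x \<in> space M - A n) sequentially"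
    show "eventually (\<lambda>k. \<bar>S k x\<bar> < \<epsilon> * w k) sequentially"
      using ev
    proof (rule eventually_mono)
      fix k assume "x \<in> space M - A k"
      then have "(S k x)^4 < (\<epsilon> * w k)^4" using x unfolding A_def by auto
      then have "\<bar>S k x\<bar>^4 < (\<epsilon> * w k)^4" by (simp add: power_abs[symmetric] del: power_abs)
      then show "\<bar>S k x\<bar> < \<epsilon> * w k"
        by (rule power_less_imp_less_base) (use ep wpos[of k] in simp)
    qed
  qed
qed

lemma (in prob_space) mart_slln:
  fixes D :: "nat \<Rightarrow> 'a \<Rightarrow> real" and H :: "nat \<Rightarrow> 'a measure" and b a :: "nat \<Rightarrow> real"
  assumes meas: "\<And>s. D s \<in> borel_measurable M"
    and bnd: "\<And>s \<omega>. \<omega> \<in> space M \<Longrightarrow> \<bar>D s \<omega>\<bar> \<le> b s"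
    and Hm: "\<And>r s. 1 \<le> r \<Longrightarrow> r < s \<Longrightarrow> D r \<in> borel_measurable (H s)"
    and orth: "\<And>s g. 1 \<le> s \<Longrightarrow> g \<in> borel_measurable (H s) \<Longrightarrow> (\<exists>B. \<forall>\<omega>\<in>space M. \<bar>g \<omega>\<bar> \<le> B) \<Longrightarrow>
                  expectation (\<lambda>\<omega>. g \<omega> * D s \<omega>) = 0"
    and bb: "\<And>s. (b s)^2 \<le> \<beta> * a s"
    and wpos: "\<And>k. (\<Sum>s\<in>{1..2^k}. a s) > 0"
    and summ: "summable (\<lambda>k. 1 / (\<Sum>s\<in>{1..2^k}. a s)^2)"
    and ep: "\<epsilon> > 0"
  shows "AE \<omega> in M. eventually (\<lambda>k. \<bar>\<Sum>s\<in>{1..2^k}. D s \<omega>\<bar> < \<epsilon> * (\<Sum>s\<in>{1..2^k}. a s)) sequentially"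
proof (rule bc_fourth[where C="11 * \<beta>^2"])
  fix k :: nat
  show "(\<lambda>\<omega>. \<Sum>s\<in>{1..2^k}. D s \<omega>) \<in> borel_measurable M" using meas by measurable
  have b0: "b s \<ge> 0" for s
  proof -
    obtain \<omega> where "\<omega> \<in> space M" using not_empty by blast
    then show ?thesis using bnd[of \<omega> s] by (meson abs_ge_zero order_trans)
  qed
  let ?C = "(\<Sum>s\<in>{1..(2::nat)^k}. b s)"
  have Sb: "\<bar>\<Sum>s\<in>{1..2^k}. D s \<omega>\<bar> \<le> ?C" if "\<omega> \<in> space M" for \<omega>
    by (rule order_trans[OF sum_abs sum_mono]) (use bnd that in auto)
  show "integrable M (\<lambda>\<omega>. (\<Sum>s\<in>{1..2^k}. D s \<omega>)^4)"
  proof (rule integrable_const_bound[where B="?C^4"])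
    show "AE \<omega> in M. norm ((\<Sum>s\<in>{1..2^k}. D s \<omega>)^4) \<le> ?C^4"
      using power_mono[OF Sb, of _ 4] by (auto simp: power_abs)
  qed (use meas in measurable)
  have "expectation (\<lambda>\<omega>. (\<Sum>s\<in>{1..2^k}. D s \<omega>)^4) \<le> 11 * (\<Sum>s\<in>{1..2^k}. (b s)^2)^2"
    apply (rule conjunct2[OF fourth_moment[of D b H]])
       apply (rule meas)
      apply (erule bnd)
     apply (erule (1) Hm)
    apply (erule (2) orth)
    done
  also have "(\<Sum>s\<in>{1..(2::nat)^k}. (b s)^2)^2 \<le> (\<beta> * (\<Sum>s\<in>{1..2^k}. a s))^2"
  proof (rule power_mono)
    show "(\<Sum>s\<in>{1..(2::nat)^k}. (b s)^2) \<le> \<beta> * (\<Sum>s\<in>{1..2^k}. a s)"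
      unfolding sum_distrib_left by (rule sum_mono) (rule bb)
  qed (simp add: sum_nonneg)
  finally show "expectation (\<lambda>\<omega>. (\<Sum>s\<in>{1..2^k}. D s \<omega>)^4) \<le> 11 * \<beta>^2 * (\<Sum>s\<in>{1..2^k}. a s)^2"
    by (simp add: power_mult_distrib)
qed (use wpos summ ep in auto)

lemma outer_quad: "v \<bullet> (outer x *v v) = (v \<bullet> x)^2"
  by (simp add: outer_def matrix_vector_mult_def inner_vec_def power2_eq_square
      sum_distrib_left sum_distrib_right mult_ac sum_product)

lemma sum_quad:
  fixes A :: "'i \<Rightarrow> real^'n^'n"
  shows "v \<bullet> ((\<Sum>s\<in>T. A s) *v v) = (\<Sum>s\<in>T. v \<bullet> (A s *v v))"
proof (induction T rule: infinite_finite_induct)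
  case (insert s T)
  then show ?case by (simp add: matrix_vector_mult_add_rdistrib inner_add_right)
qed simp_all

lemma inner_stack:
  fixes v :: "real^('m::finite+'k::finite)"
  shows "v \<bullet> stack q c = (\<chi> j. v $ Inl j) \<bullet> q + (\<chi> j. v $ Inr j) \<bullet> c"
proof -
  have "v \<bullet> stack q c = (\<Sum>i\<in>(UNIV::'m set) <+> (UNIV::'k set). v $ i * stack q c $ i)"
    unfolding UNIV_Plus_UNIV by (simp add: inner_vec_def)
  also have "\<dots> = (\<Sum>j\<in>UNIV. v $ Inl j * q $ j) + (\<Sum>j\<in>UNIV. v $ Inr j * c $ j)"
    by (simp add: sum.Plus stack_def del: UNIV_Plus_UNIV)
  finally show ?thesis by (simp add: inner_vec_def)
qed

lemma norm2_split:
  fixes v :: "real^('m::finite+'k::finite)"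
  shows "v \<bullet> v = (\<chi> j. v $ Inl j) \<bullet> (\<chi> j. v $ Inl j) + (\<chi> j. v $ Inr j) \<bullet> (\<chi> j. v $ Inr j)"
proof -
  have "v \<bullet> v = (\<Sum>i\<in>(UNIV::'m set) <+> (UNIV::'k set). v $ i * v $ i)"
    unfolding UNIV_Plus_UNIV by (simp add: inner_vec_def)
  also have "\<dots> = (\<Sum>j\<in>UNIV. v $ Inl j * v $ Inl j) + (\<Sum>j\<in>UNIV. v $ Inr j * v $ Inr j)"
    by (simp add: sum.Plus del: UNIV_Plus_UNIV)
  finally show ?thesis by (simp add: inner_vec_def)
qed

lemma GL:
  fixes x :: "real^'i" and z :: "real^'j"
  shows "(\<Sum>s\<in>T. g s * ((x \<bullet> X s) * (z \<bullet> Z s))) = (\<Sum>i\<in>UNIV. \<Sum>j\<in>UNIV. x $ i * z $ j * (\<Sum>s\<in>T. g s * (X s $ i * Z s $ j)))"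
proof -
  have "(\<Sum>s\<in>T. g s * ((x \<bullet> X s) * (z \<bullet> Z s))) = (\<Sum>s\<in>T. \<Sum>i\<in>UNIV. \<Sum>j\<in>UNIV. x $ i * z $ j * (g s * (X s $ i * Z s $ j)))"
    by (simp add: inner_vec_def sum_product sum_distrib_left mult_ac sum.swap[of _ "UNIV::'j set"])
  also have "\<dots> = (\<Sum>i\<in>UNIV. \<Sum>s\<in>T. \<Sum>j\<in>UNIV. x $ i * z $ j * (g s * (X s $ i * Z s $ j)))"
    by (rule sum.swap)
  also have "\<dots> = (\<Sum>i\<in>UNIV. \<Sum>j\<in>UNIV. \<Sum>s\<in>T. x $ i * z $ j * (g s * (X s $ i * Z s $ j)))"
    by (rule sum.cong[OF refl], rule sum.swap)
  also have "\<dots> = (\<Sum>i\<in>UNIV. \<Sum>j\<in>UNIV. x $ i * z $ j * (\<Sum>s\<in>T. g s * (X s $ i * Z s $ j)))"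
    by (simp add: sum_distrib_left)
  finally show ?thesis .
qed

lemma BL:
  fixes x :: "real^'i" and z :: "real^'j"
  assumes "\<And>i j. \<bar>E i j\<bar> \<le> e"
  shows "\<bar>\<Sum>i\<in>UNIV. \<Sum>j\<in>UNIV. x $ i * z $ j * E i j\<bar> \<le> e * (CARD('j) * (x \<bullet> x) + CARD('i) * (z \<bullet> z)) / 2"
proof -
  have e0: "e \<ge> 0" using assms[of undefined undefined] by linarith
  have "\<bar>\<Sum>i\<in>UNIV. \<Sum>j\<in>UNIV. x $ i * z $ j * E i j\<bar> \<le> (\<Sum>i\<in>UNIV. \<Sum>j\<in>UNIV. \<bar>x $ i * z $ j * E i j\<bar>)"
    by (rule order_trans[OF sum_abs sum_mono[OF sum_abs]])
  also have "\<dots> \<le> (\<Sum>i\<in>UNIV. \<Sum>j\<in>UNIV. e * ((x $ i)^2 + (z $ j)^2) / 2)"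
  proof (intro sum_mono)
    fix i j
    have "2 * \<bar>x $ i * z $ j\<bar> \<le> (x $ i)^2 + (z $ j)^2"
    proof -
      have "0 \<le> (\<bar>x $ i\<bar> - \<bar>z $ j\<bar>) * (\<bar>x $ i\<bar> - \<bar>z $ j\<bar>)" by simp
      moreover have "\<bar>x $ i\<bar> * \<bar>x $ i\<bar> = x $ i * x $ i" "\<bar>z $ j\<bar> * \<bar>z $ j\<bar> = z $ j * z $ j" by simp_all
      ultimately show ?thesis by (simp add: power2_eq_square abs_mult algebra_simps)
    qed
    then have "\<bar>x $ i * z $ j\<bar> * \<bar>E i j\<bar> \<le> ((x $ i)^2 + (z $ j)^2) / 2 * e"
      by (intro mult_mono) (use assms e0 in auto)
    then show "\<bar>x $ i * z $ j * E i j\<bar> \<le> e * ((x $ i)^2 + (z $ j)^2) / 2"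
      by (simp add: abs_mult mult_ac)
  qed
  also have "\<dots> = e / 2 * (\<Sum>i\<in>UNIV. \<Sum>j\<in>(UNIV::'j set). (x $ i)^2 + (z $ j)^2)"
    by (simp add: sum_distrib_left)
  also have "(\<Sum>i\<in>UNIV. \<Sum>j\<in>(UNIV::'j set). (x $ i)^2 + (z $ j)^2) = CARD('j) * (x \<bullet> x) + CARD('i) * (z \<bullet> z)"
    by (simp add: sum.distrib inner_vec_def power2_eq_square sum_distrib_left[symmetric] sum.swap[of "\<lambda>i j. z $ j * z $ j"])
  finally show ?thesis by simp
qed

lemma quad_Sc:
  fixes w :: "real^'k" and A :: "real^'k^'k"
  shows "(\<Sum>i\<in>UNIV. \<Sum>j\<in>UNIV. w $ i * w $ j * A $ i $ j) = w \<bullet> (A *v w)"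
  by (simp add: inner_vec_def matrix_vector_mult_def sum_distrib_left mult_ac)

lemma split_quad:
  fixes w :: "real^'k"
  shows "(\<Sum>i\<in>UNIV. \<Sum>j\<in>UNIV. w $ i * w $ j * (N * A $ i $ j + E i j))
     = N * (w \<bullet> (A *v w)) + (\<Sum>i\<in>UNIV. \<Sum>j\<in>UNIV. w $ i * w $ j * E i j)"
  by (simp add: quad_Sc[symmetric] algebra_simps sum.distrib sum_distrib_left)

lemma core:
  fixes c :: "nat \<Rightarrow> real^'k" and p u :: "nat \<Rightarrow> real^'m" and a :: "nat \<Rightarrow> real"
    and Sc :: "real^'k^'k" and Su :: "real^'m^'m" and v :: "real^('m+'k)" and ea eb ec :: real
  assumes fin: "finite T"
    and a01: "\<And>s. s \<in> T \<Longrightarrow> 0 \<le> a s \<and> a s \<le> 1"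
    and qb: "\<And>s. s \<in> T \<Longrightarrow> norm (p s + a s *\<^sub>R u s) \<le> Bq"
    and Bq: "Bq > 0"
    and lc: "lc > 0" and lcq: "\<And>w. w \<bullet> (Sc *v w) \<ge> lc * (w \<bullet> w)"
    and lu: "lu > 0" and luq: "\<And>w. w \<bullet> (Su *v w) \<ge> lu * (w \<bullet> w)"
    and Wdef: "W = (\<Sum>s\<in>T. (a s)^2)"
    and h1: "\<And>i j. \<bar>(\<Sum>s\<in>T. c s $ i * c s $ j) - card T * Sc $ i $ j\<bar> \<le> ea * card T"
    and ea: "ea * CARD('k) \<le> lc / 2"
    and h2: "\<And>i j. \<bar>(\<Sum>s\<in>T. (a s)^2 * (u s $ i * u s $ j)) - W * Su $ i $ j\<bar> \<le> eb * W"
    and eb: "eb * CARD('m) \<le> lu / 2"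
    and h3: "\<And>i j. \<bar>\<Sum>s\<in>T. a s * (stack (p s) (c s) $ i * u s $ j)\<bar> \<le> ec * W"
    and ec: "ec * (CARD('m) + CARD('m+'k)) \<le> lu / (4 * (1 + 8 * Bq^2 / lc))" and ec0: "ec \<ge> 0"
  shows "v \<bullet> ((\<Sum>s\<in>T. outer (stack (p s + a s *\<^sub>R u s) (c s))) *v v)
           \<ge> min (Bq^2 / (1 + 8 * Bq^2 / lc)) (lu / (4 * (1 + 8 * Bq^2 / lc))) * W * (v \<bullet> v)"
proof -
  define \<delta> where "\<delta> = 8 * Bq^2 / lc"
  have \<delta>0: "\<delta> > 0" using Bq lc by (simp add: \<delta>_def)
  define vp where "vp = (\<chi> j. v $ Inl j)"
  define vc where "vc = (\<chi> j. v $ Inr j)"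
  define P where "P = vp \<bullet> vp"
  define Cc where "Cc = vc \<bullet> vc"
  define V where "V = v \<bullet> v"
  have VPC: "V = P + Cc" unfolding V_def P_def Cc_def vp_def vc_def by (rule norm2_split)
  have P0: "P \<ge> 0" "Cc \<ge> 0" unfolding P_def Cc_def by simp_all
  define q where "q s = p s + a s *\<^sub>R u s" for s
  define x where "x s = stack (q s) (c s)" for s
  define y where "y s = stack (p s) (c s)" for s
  define N where "N = real (card T)"
  have N0: "N \<ge> 0" by (simp add: N_def)
  have W0: "W \<ge> 0" unfolding Wdef by (simp add: sum_nonneg)
  have WN: "W \<le> N" unfolding Wdef N_def
  proof -
    have "(\<Sum>s\<in>T. (a s)^2) \<le> (\<Sum>s\<in>T. 1)"
      by (rule sum_mono) (use a01 in \<open>auto simp: power_le_one\<close>)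
    then show "(\<Sum>s\<in>T. (a s)^2) \<le> real (card T)" by simp
  qed
  have Q: "v \<bullet> ((\<Sum>s\<in>T. outer (stack (p s + a s *\<^sub>R u s) (c s))) *v v) = (\<Sum>s\<in>T. (v \<bullet> x s)^2)"
    by (simp add: sum_quad outer_quad x_def q_def)
  have vx: "v \<bullet> x s = vp \<bullet> q s + vc \<bullet> c s" for s
    unfolding x_def vp_def vc_def by (rule inner_stack)
  have vxy: "v \<bullet> x s = v \<bullet> y s + a s * (vp \<bullet> u s)" for s
    unfolding vx y_def inner_stack q_def vp_def[symmetric] vc_def[symmetric]
    by (simp add: inner_add_right algebra_simps)
  have A1: "(\<Sum>s\<in>T. (vc \<bullet> c s)^2) = N * (vc \<bullet> (Sc *v vc)) + (\<Sum>i\<in>UNIV. \<Sum>j\<in>UNIV. vc $ i * vc $ j * ((\<Sum>s\<in>T. c s $ i * c s $ j) - N * Sc $ i $ j))"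
  proof -
    have "(\<Sum>s\<in>T. (vc \<bullet> c s)^2) = (\<Sum>s\<in>T. 1 * ((vc \<bullet> c s) * (vc \<bullet> c s)))"
      by (simp add: power2_eq_square)
    also have "\<dots> = (\<Sum>i\<in>UNIV. \<Sum>j\<in>UNIV. vc $ i * vc $ j * (\<Sum>s\<in>T. 1 * (c s $ i * c s $ j)))"
      by (rule GL)
    also have "\<dots> = (\<Sum>i\<in>UNIV. \<Sum>j\<in>UNIV. vc $ i * vc $ j * (N * Sc $ i $ j + ((\<Sum>s\<in>T. c s $ i * c s $ j) - N * Sc $ i $ j)))"
      by simp
    finally show ?thesis by (simp only: split_quad)
  qed
  have A2: "\<bar>\<Sum>i\<in>UNIV. \<Sum>j\<in>UNIV. vc $ i * vc $ j * ((\<Sum>s\<in>T. c s $ i * c s $ j) - N * Sc $ i $ j)\<bar> \<le> ea * N * (CARD('k) * Cc + CARD('k) * Cc) / 2"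
    unfolding Cc_def by (rule BL) (use h1 in \<open>simp add: N_def\<close>)
  have "ea * N * (CARD('k) * Cc + CARD('k) * Cc) / 2 = (ea * CARD('k)) * (N * Cc)" by (simp add: algebra_simps)
  also have "\<dots> \<le> lc / 2 * (N * Cc)" by (rule mult_right_mono[OF ea]) (use N0 P0 in simp)
  finally have A2': "\<bar>\<Sum>i\<in>UNIV. \<Sum>j\<in>UNIV. vc $ i * vc $ j * ((\<Sum>s\<in>T. c s $ i * c s $ j) - N * Sc $ i $ j)\<bar> \<le> lc / 2 * (N * Cc)"
    using A2 by linarith
  have "N * (lc * Cc) \<le> N * (vc \<bullet> (Sc *v vc))" using lcq[of vc] N0 unfolding Cc_def by (intro mult_left_mono) auto
  then have SA: "(\<Sum>s\<in>T. (vc \<bullet> c s)^2) \<ge> lc / 2 * N * Cc" using A1 A2' by (simp add: algebra_simps abs_le_iff)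
  have pwA: "(v \<bullet> x s)^2 \<ge> (vc \<bullet> c s)^2 / 2 - Bq^2 * P" if "s \<in> T" for s
  proof -
    have "\<bar>vp \<bullet> q s\<bar> \<le> norm vp * norm (q s)" by (rule Cauchy_Schwarz_ineq2)
    also have "\<dots> \<le> norm vp * Bq" using qb[OF that] unfolding q_def by (intro mult_left_mono) auto
    finally have "(vp \<bullet> q s)^2 \<le> (norm vp * Bq)^2" by (metis abs_ge_zero power2_abs power_mono)
    then have b: "(vp \<bullet> q s)^2 \<le> Bq^2 * P" unfolding P_def by (simp add: power_mult_distrib dot_square_norm mult_ac)
    have "(vc \<bullet> c s)^2 / 2 - (vp \<bullet> q s)^2 \<le> (vp \<bullet> q s + vc \<bullet> c s)^2"
    proof -
      have "0 \<le> 2 * (vp \<bullet> q s + (vc \<bullet> c s) / 2)^2" by simp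
      then show ?thesis by (simp add: power2_eq_square algebra_simps)
    qed
    then show ?thesis using b vx[of s] by simp
  qed
  have QA: "(\<Sum>s\<in>T. (v \<bullet> x s)^2) \<ge> lc / 4 * N * Cc - N * Bq^2 * P"
  proof -
    have "(\<Sum>s\<in>T. (v \<bullet> x s)^2) \<ge> (\<Sum>s\<in>T. (vc \<bullet> c s)^2 / 2 - Bq^2 * P)"
      by (rule sum_mono) (use pwA in auto)
    also have "(\<Sum>s\<in>T. (vc \<bullet> c s)^2 / 2 - Bq^2 * P) = (\<Sum>s\<in>T. (vc \<bullet> c s)^2) / 2 - N * Bq^2 * P"
      by (simp add: sum_subtractf sum_divide_distrib N_def)
    finally show ?thesis using SA by linarith
  qed
  have B1: "(\<Sum>s\<in>T. (a s)^2 * ((vp \<bullet> u s) * (vp \<bullet> u s))) = W * (vp \<bullet> (Su *v vp)) + (\<Sum>i\<in>UNIV. \<Sum>j\<in>UNIV. vp $ i * vp $ j * ((\<Sum>s\<in>T. (a s)^2 * (u s $ i * u s $ j)) - W * Su $ i $ j))"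
  proof -
    have "(\<Sum>s\<in>T. (a s)^2 * ((vp \<bullet> u s) * (vp \<bullet> u s))) = (\<Sum>i\<in>UNIV. \<Sum>j\<in>UNIV. vp $ i * vp $ j * (\<Sum>s\<in>T. (a s)^2 * (u s $ i * u s $ j)))"
      by (rule GL)
    also have "\<dots> = (\<Sum>i\<in>UNIV. \<Sum>j\<in>UNIV. vp $ i * vp $ j * (W * Su $ i $ j + ((\<Sum>s\<in>T. (a s)^2 * (u s $ i * u s $ j)) - W * Su $ i $ j)))"
      by simp
    finally show ?thesis by (simp only: split_quad)
  qed
  have B2: "\<bar>\<Sum>i\<in>UNIV. \<Sum>j\<in>UNIV. vp $ i * vp $ j * ((\<Sum>s\<in>T. (a s)^2 * (u s $ i * u s $ j)) - W * Su $ i $ j)\<bar> \<le> eb * W * (CARD('m) * P + CARD('m) * P) / 2"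
    unfolding P_def by (rule BL) (use h2 in simp)
  have "eb * W * (CARD('m) * P + CARD('m) * P) / 2 = (eb * CARD('m)) * (W * P)" by (simp add: algebra_simps)
  also have "\<dots> \<le> lu / 2 * (W * P)" by (rule mult_right_mono[OF eb]) (use W0 P0 in simp)
  finally have B2': "\<bar>\<Sum>i\<in>UNIV. \<Sum>j\<in>UNIV. vp $ i * vp $ j * ((\<Sum>s\<in>T. (a s)^2 * (u s $ i * u s $ j)) - W * Su $ i $ j)\<bar> \<le> lu / 2 * (W * P)"
    using B2 by linarith
  have "W * (lu * P) \<le> W * (vp \<bullet> (Su *v vp))" using luq[of vp] W0 unfolding P_def by (intro mult_left_mono) auto
  then have SB: "(\<Sum>s\<in>T. (a s)^2 * ((vp \<bullet> u s) * (vp \<bullet> u s))) \<ge> lu / 2 * W * P"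
    using B1 B2' by (simp add: algebra_simps abs_le_iff)
  have B3: "(\<Sum>s\<in>T. a s * ((v \<bullet> y s) * (vp \<bullet> u s))) = (\<Sum>i\<in>UNIV. \<Sum>j\<in>UNIV. v $ i * vp $ j * (\<Sum>s\<in>T. a s * (y s $ i * u s $ j)))"
    by (rule GL)
  have B4: "\<bar>\<Sum>i\<in>UNIV. \<Sum>j\<in>UNIV. v $ i * vp $ j * (\<Sum>s\<in>T. a s * (y s $ i * u s $ j))\<bar> \<le> ec * W * (CARD('m) * V + CARD('m+'k) * P) / 2"
    unfolding V_def P_def by (rule BL) (use h3 in \<open>simp add: y_def\<close>)
  have "ec * W * (CARD('m) * V + CARD('m+'k) * P) / 2 \<le> ec * W * (CARD('m) * V + CARD('m+'k) * V) / 2"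
    using VPC P0 ec0 W0 by (intro divide_right_mono mult_left_mono add_left_mono) (auto simp: mult_nonneg_nonneg)
  also have "\<dots> = (ec * (CARD('m) + CARD('m+'k))) * (W * V) / 2" by (simp add: algebra_simps)
  also have "\<dots> \<le> lu / (4 * (1 + \<delta>)) * (W * V) / 2"
    using ec W0 VPC P0 unfolding \<delta>_def by (intro divide_right_mono mult_right_mono) auto
  finally have B4': "\<bar>\<Sum>s\<in>T. a s * ((v \<bullet> y s) * (vp \<bullet> u s))\<bar> \<le> lu / (4 * (1 + \<delta>)) * (W * V) / 2"
    using B3 B4 by linarith
  have pwB: "(v \<bullet> x s)^2 \<ge> 2 * (a s * ((v \<bullet> y s) * (vp \<bullet> u s))) + (a s)^2 * ((vp \<bullet> u s) * (vp \<bullet> u s))" for s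
  proof -
    have "0 \<le> (v \<bullet> y s)^2" by simp
    then show ?thesis unfolding vxy by (simp add: power2_eq_square algebra_simps)
  qed
  have QB: "(\<Sum>s\<in>T. (v \<bullet> x s)^2) \<ge> lu / 2 * W * P - lu / (4 * (1 + \<delta>)) * (W * V)"
  proof -
    have "(\<Sum>s\<in>T. (v \<bullet> x s)^2) \<ge> (\<Sum>s\<in>T. 2 * (a s * ((v \<bullet> y s) * (vp \<bullet> u s))) + (a s)^2 * ((vp \<bullet> u s) * (vp \<bullet> u s)))"
      by (rule sum_mono) (rule pwB)
    also have "(\<Sum>s\<in>T. 2 * (a s * ((v \<bullet> y s) * (vp \<bullet> u s))) + (a s)^2 * ((vp \<bullet> u s) * (vp \<bullet> u s)))
       = 2 * (\<Sum>s\<in>T. a s * ((v \<bullet> y s) * (vp \<bullet> u s))) + (\<Sum>s\<in>T. (a s)^2 * ((vp \<bullet> u s) * (vp \<bullet> u s)))"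
      by (simp add: sum.distrib sum_distrib_left)
    finally have f: "2 * (\<Sum>s\<in>T. a s * ((v \<bullet> y s) * (vp \<bullet> u s))) + (\<Sum>s\<in>T. (a s)^2 * ((vp \<bullet> u s) * (vp \<bullet> u s))) \<le> (\<Sum>s\<in>T. (v \<bullet> x s)^2)" .
    have g: "- (\<Sum>s\<in>T. a s * ((v \<bullet> y s) * (vp \<bullet> u s))) \<le> lu / (4 * (1 + \<delta>)) * (W * V) / 2"
      using B4' by (simp only: abs_le_iff)
    define Z where "Z = lu / (4 * (1 + \<delta>)) * (W * V)"
    define L where "L = lu / 2 * W * P"
    show ?thesis using f g SB unfolding Z_def[symmetric] L_def[symmetric] by linarith
  qed
  define K where "K = min (Bq^2 / (1 + \<delta>)) (lu / (4 * (1 + \<delta>)))"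
  have WV0: "W * V \<ge> 0" using W0 VPC P0 by simp
  have "(\<Sum>s\<in>T. (v \<bullet> x s)^2) \<ge> K * (W * V)"
  proof (cases "Cc \<ge> \<delta> * P")
    case True
    have "Bq^2 * P = lc / 8 * (\<delta> * P)" using lc by (simp add: \<delta>_def)
    also have "\<dots> \<le> lc / 8 * Cc" using True lc by (intro mult_left_mono) auto
    finally have "N * (Bq^2 * P) \<le> N * (lc / 8 * Cc)" using N0 by (intro mult_left_mono) auto
    then have q1: "(\<Sum>s\<in>T. (v \<bullet> x s)^2) \<ge> lc / 8 * (N * Cc)" using QA by (simp add: algebra_simps)
    have "\<delta> * V = \<delta> * P + \<delta> * Cc" by (simp add: VPC algebra_simps)
    also have "\<dots> \<le> Cc + \<delta> * Cc" using True by simp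
    finally have "\<delta> * V \<le> (1 + \<delta>) * Cc" by (simp add: algebra_simps)
    then have CcV: "\<delta> / (1 + \<delta>) * V \<le> Cc" using \<delta>0 by (simp add: field_simps)
    have "K * (W * V) \<le> Bq^2 / (1 + \<delta>) * (W * V)" unfolding K_def using WV0 by (intro mult_right_mono) auto
    also have "Bq^2 / (1 + \<delta>) = lc / 8 * (\<delta> / (1 + \<delta>))" using lc by (simp add: \<delta>_def)
    also have "lc / 8 * (\<delta> / (1 + \<delta>)) * (W * V) \<le> lc / 8 * (\<delta> / (1 + \<delta>)) * (N * V)"
      using WN VPC P0 lc \<delta>0 by (intro mult_left_mono mult_right_mono) auto
    also have "\<dots> = lc / 8 * (N * (\<delta> / (1 + \<delta>) * V))" by (simp add: algebra_simps)
    also have "\<dots> \<le> lc / 8 * (N * Cc)" using CcV N0 lc by (intro mult_left_mono) auto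
    finally show ?thesis using q1 by linarith
  next
    case False
    have "V \<le> (1 + \<delta>) * P" using False VPC by (simp add: algebra_simps)
    then have PV: "V / (1 + \<delta>) \<le> P" using \<delta>0 by (simp add: field_simps)
    have "lu / 2 * W * (V / (1 + \<delta>)) \<le> lu / 2 * W * P" using PV lu W0 by (intro mult_left_mono) auto
    moreover have "lu / 2 * W * (V / (1 + \<delta>)) = 2 * (lu / (4 * (1 + \<delta>)) * (W * V))" using \<delta>0 by (simp add: field_simps)
    ultimately have "(\<Sum>s\<in>T. (v \<bullet> x s)^2) \<ge> lu / (4 * (1 + \<delta>)) * (W * V)" using QB by linarith
    moreover have "K * (W * V) \<le> lu / (4 * (1 + \<delta>)) * (W * V)" unfolding K_def using WV0 by (intro mult_right_mono) auto
    ultimately show ?thesis by linarith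
  qed
  then show ?thesis unfolding Q K_def \<delta>_def V_def by (simp add: mult_ac)
qed

lemma alpha_sq: "s \<ge> 1 \<Longrightarrow> (real s powr (-\<eta>))^2 = real s powr (-2*\<eta>)"
  by (simp add: power2_eq_square powr_add[symmetric])

lemma alpha_pos: "s \<ge> 1 \<Longrightarrow> real s powr (-\<eta>) > 0"
  by simp

lemma alpha_le1: "s \<ge> 1 \<Longrightarrow> 0 \<le> \<eta> \<Longrightarrow> real s powr (-\<eta>) \<le> 1"
  by (simp add: powr_minus_divide ge_one_powr_ge_zero)

lemma W_double:
  assumes "0 \<le> \<eta>"
  shows "(\<Sum>s\<in>{1..2*n}. (real s powr (-\<eta>))^2) \<le> 2 * (\<Sum>s\<in>{1..n}. (real s powr (-\<eta>))^2)"
proof (induction n)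
  case (Suc n)
  have e1: "(\<Sum>s\<in>{1..2*Suc n}. (real s powr (-\<eta>))^2) = (\<Sum>s\<in>{1..2*n}. (real s powr (-\<eta>))^2)
      + (real (Suc (2*n)) powr (-\<eta>))^2 + (real (Suc (Suc (2*n))) powr (-\<eta>))^2"
    by (simp add: sum.cl_ivl_Suc)
  have e2: "(\<Sum>s\<in>{1..Suc n}. (real s powr (-\<eta>))^2) = (\<Sum>s\<in>{1..n}. (real s powr (-\<eta>))^2) + (real (Suc n) powr (-\<eta>))^2"
    by (simp add: sum.cl_ivl_Suc)
  have m: "(real m powr (-\<eta>))^2 \<le> (real (Suc n) powr (-\<eta>))^2" if "Suc n \<le> m" for m
  proof -
    have "real m powr (-\<eta>) \<le> real (Suc n) powr (-\<eta>)"
      by (rule powr_mono2') (use assms that in auto)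
    then show ?thesis by (rule power_mono) simp
  qed
  have a1: "(real (Suc (2*n)) powr (-\<eta>))^2 \<le> (real (Suc n) powr (-\<eta>))^2" by (rule m) simp
  have a2: "(real (Suc (Suc (2*n))) powr (-\<eta>))^2 \<le> (real (Suc n) powr (-\<eta>))^2" by (rule m) simp
  show ?case unfolding e1 e2
    by (rule order_trans[OF add_mono[OF add_mono[OF Suc.IH a1] a2]]) (simp add: algebra_simps)
qed simp

lemma W_mono:
  "n \<le> n' \<Longrightarrow> (\<Sum>s\<in>{1..n}. (real s powr (-\<eta>))^2) \<le> (\<Sum>s\<in>{1..n'}. (real s powr (-\<eta>))^2)"
  by (rule sum_mono2) auto

lemma W_lower:
  assumes "n \<ge> 1" "0 \<le> \<eta>"
  shows "(\<Sum>s\<in>{1..n}. (real s powr (-\<eta>))^2) \<ge> real n powr (1 - 2*\<eta>)"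
proof -
  have "(\<Sum>s\<in>{1..n}. (real s powr (-\<eta>))^2) \<ge> (\<Sum>s\<in>{1..n}. real n powr (-2*\<eta>))"
  proof (rule sum_mono)
    fix s assume s: "s \<in> {1..n}"
    have "real n powr (-2*\<eta>) \<le> real s powr (-2*\<eta>)"
      by (rule powr_mono2') (use assms s in auto)
    then show "real n powr (-2*\<eta>) \<le> (real s powr (-\<eta>))^2" using alpha_sq[of s \<eta>] s by simp
  qed
  also have "(\<Sum>s\<in>{1..n}. real n powr (-2*\<eta>)) = real n * real n powr (-2*\<eta>)" using assms by simp
  also have "\<dots> = real n powr (1 - 2*\<eta>)"
  proof -
    have "real n > 0" using assms by simp
    then show ?thesis by (simp add: powr_diff powr_minus_divide)
  qed
  finally show ?thesis .
qed

lemma W_pos: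
  assumes "0 \<le> \<eta>"
  shows "(\<Sum>s\<in>{1..2^k}. (real s powr (-\<eta>))^2) > 0"
proof -
  have h: "(1::nat) \<le> 2^k" by simp
  have "0 < real (2^k) powr (1 - 2*\<eta>)" by simp
  with W_lower[OF h assms] show ?thesis by linarith
qed

lemma W_summable:
  assumes "0 \<le> \<eta>" "\<eta> < 1/2"
  shows "summable (\<lambda>k. 1 / (\<Sum>s\<in>{1..2^k}. (real s powr (-\<eta>))^2)^2)"
proof -
  define r where "r = (2::real) powr (1 - 2*\<eta>)"
  have r1: "r > 1" unfolding r_def using assms by simp
  have bnd: "norm (1 / (\<Sum>s\<in>{1..2^k}. (real s powr (-\<eta>))^2)^2) \<le> (1 / r^2)^k" for k
  proof -
    have "(1::nat) \<le> 2^k" by simp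
    have "r^k = real (2^k) powr (1 - 2*\<eta>)" 
    proof -
      have "r^k = 2 powr (real k * (1 - 2*\<eta>))" unfolding r_def by (rule powr_power) simp
      also have "\<dots> = (2 powr real k) powr (1 - 2*\<eta>)" by (simp add: powr_powr)
      also have "2 powr real k = real (2^k)" by (simp add: powr_realpow)
      finally show ?thesis .
    qed
    also have "\<dots> \<le> (\<Sum>s\<in>{1..2^k}. (real s powr (-\<eta>))^2)" by (rule W_lower) (use assms in auto)
    finally have le: "r^k \<le> (\<Sum>s\<in>{1..2^k}. (real s powr (-\<eta>))^2)" .
    have rk: "r^k > 0" using r1 by simp
    have Wp: "(\<Sum>s\<in>{1..2^k}. (real s powr (-\<eta>))^2) > 0" using rk le by linarith
    have "(r^k)^2 \<le> (\<Sum>s\<in>{1..2^k}. (real s powr (-\<eta>))^2)^2" by (rule power_mono[OF le]) (use rk in simp)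
    then have "1 / (\<Sum>s\<in>{1..2^k}. (real s powr (-\<eta>))^2)^2 \<le> 1 / (r^k)^2"
      by (rule divide_left_mono) (use rk Wp mult_pos_pos[OF zero_less_power[OF Wp, of 2] zero_less_power[OF rk, of 2]] in simp_all)
    moreover have "1 / (r^k)^2 = (1 / r^2)^k" by (simp add: power_mult_distrib power_divide power_mult[symmetric] mult.commute)
    ultimately show ?thesis by simp
  qed
  show ?thesis
    by (rule summable_comparison_test[OF _ summable_geometric[of "1 / r^2"]]) (use bnd r1 in auto)
qed

lemma bm_vec_nth: "f \<in> borel_measurable M \<Longrightarrow> (\<lambda>x. (f x :: real^'n) $ i) \<in> borel_measurable M"
  by (rule measurable_compose[OF _ borel_measurable_continuous_onI[OF linear_continuous_on[OF bounded_linear_vec_nth]]])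

lemma nth_bm: "(\<lambda>x::real^'n. x $ i) \<in> borel_measurable borel"
  by (rule bm_vec_nth[of "\<lambda>x. x"]) simp

lemma stack_Inl[simp]: "stack p c $ Inl j = p $ j" and stack_Inr[simp]: "stack p c $ Inr j = c $ j"
  by (simp_all add: stack_def)

lemma stack_bm:
  assumes "p \<in> borel_measurable N" "q \<in> borel_measurable N"
  shows "(\<lambda>\<omega>. stack (p \<omega>) (q \<omega>) $ i) \<in> borel_measurable N"
  using assms by (cases i) (simp_all add: stack_def bm_vec_nth)

lemma AE_all2:
  assumes "\<And>i j. AE x in M. P i j x"
  shows "AE x in M. \<forall>(i::'i::finite) (j::'j::finite). P i j x"
proof -
  have "AE x in M. \<forall>p\<in>(UNIV::('i \<times> 'j) set). P (fst p) (snd p) x"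
    by (rule AE_finite_allI) (use assms in auto)
  then show ?thesis by (rule eventually_mono) auto
qed

lemma ev_all2:
  assumes "\<forall>(i::'i::finite) (j::'j::finite). eventually (\<lambda>k. P i j k) F"
  shows "eventually (\<lambda>k. \<forall>i j. P i j k) F"
proof -
  have "eventually (\<lambda>k. \<forall>j. P i j k) F" for i
    by (rule eventually_all_finite) (use assms in auto)
  then show ?thesis by (rule eventually_all_finite)
qed

lemma transpose_outer_sum: "transpose (\<Sum>s\<in>T. outer (x s)) = (\<Sum>s\<in>T. outer (x s))"
  by (simp add: vec_eq_iff transpose_def outer_def mult.commute)

lemma Q_mono:
  assumes "T \<subseteq> T'" "finite T'"
  shows "v \<bullet> ((\<Sum>s\<in>T. outer (x s)) *v v) \<le> v \<bullet> ((\<Sum>s\<in>T'. outer (x s)) *v v)"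
  unfolding sum_quad outer_quad by (rule sum_mono2) (use assms in auto)

lemma comp_le_norm: "\<bar>(x::real^'n) $ i\<bar> \<le> norm x"
  by (rule component_le_norm_cart)

theorem proposition2:
  fixes M :: "'a measure"
    and F :: "nat \<Rightarrow> 'a measure"
    and c :: "nat \<Rightarrow> 'a \<Rightarrow> real ^ 'k"
    and u :: "nat \<Rightarrow> 'a \<Rightarrow> real ^ 'm"
    and pbar :: "nat \<Rightarrow> 'a \<Rightarrow> real ^ 'm"
    and \<eta> :: real
  assumes "prob_space M"
    and "0 \<le> \<eta>" and "\<eta> < 1/2"
    \<comment> \<open>filtration of the past\<close>
    and "\<And>s. subalgebra M (F s)"
    and "\<And>s. sets (F s) \<subseteq> sets (F (Suc s))"
    \<comment> \<open>contexts: adapted, i.i.d. (identically distributed, independent of the past), bounded, positive definite second moment\<close>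
    and "\<And>s. s \<ge> 1 \<Longrightarrow> c s \<in> borel_measurable (F s)"
    and "\<And>s. s \<ge> 1 \<Longrightarrow> distr M borel (c s) = distr M borel (c 1)"
    and "\<And>s. s \<ge> 1 \<Longrightarrow> prob_space.indep_set M (sets (F (s - 1))) (gen_sets M (c s))"
    and "\<exists>B. \<forall>s\<ge>1. \<forall>\<omega>\<in>space M. norm (c s \<omega>) \<le> B"
    and "pos_def (prob_space.expectation M (\<lambda>\<omega>. outer (c 1 \<omega>)))"
    \<comment> \<open>certainty-equivalent prices: bounded, determined by c_s and the past\<close>
    and "\<And>s. s \<ge> 1 \<Longrightarrow> pbar s \<in> borel_measurable (past_ctx M F c s)"
    and "\<exists>B. \<forall>s\<ge>1. \<forall>\<omega>\<in>space M. norm (pbar s \<omega>) \<le> B"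
    \<comment> \<open>perturbations: adapted, i.i.d., bounded, mean zero, positive definite covariance, independent of c_s and the past\<close>
    and "\<And>s. s \<ge> 1 \<Longrightarrow> u s \<in> borel_measurable (F s)"
    and "\<And>s. s \<ge> 1 \<Longrightarrow> distr M borel (u s) = distr M borel (u 1)"
    and "\<And>s. s \<ge> 1 \<Longrightarrow> prob_space.indep_set M (sets (past_ctx M F c s)) (gen_sets M (u s))"
    and "\<exists>B. \<forall>s\<ge>1. \<forall>\<omega>\<in>space M. norm (u s \<omega>) \<le> B"
    and "prob_space.expectation M (u 1) = 0"
    and "pos_def (prob_space.expectation M (\<lambda>\<omega>. outer (u 1 \<omega>)))"
  shows "AE \<omega> in M. \<exists>K>0. \<exists>T0. \<forall>t\<ge>T0.
           min_eig (\<Sum>s\<in>{1..t}. outer (stack (pbar s \<omega> + (real s powr (-\<eta>)) *\<^sub>R u s \<omega>) (c s \<omega>)))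
             \<ge> K * (\<Sum>s\<in>{1..t}. (real s powr (-\<eta>))\<^sup>2)"
proof -
  interpret P: prob_space M by (rule assms(1))
  note eta0 = assms(2) and eta1 = assms(3) and sub = assms(4) and Fmono1 = assms(5)
    and cF = assms(6) and cdist = assms(7) and cind = assms(8) and cbnd = assms(9) and cpd = assms(10)
    and pF = assms(11) and pbnd = assms(12) and uF = assms(13) and udist = assms(14) and uind = assms(15)
    and ubnd = assms(16) and umean = assms(17) and upd = assms(18)
  have spF: "space (F s) = space M" for s using sub[of s] unfolding subalgebra_def by simp
  have setsF: "sets (F s) \<subseteq> sets M" for s using sub[of s] unfolding subalgebra_def by simp
  have Fmono: "sets (F r) \<subseteq> sets (F s)" if "r \<le> s" for r s
    using lift_Suc_mono_le[of "\<lambda>s. sets (F s)", OF Fmono1 that] .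
  have liftF: "f \<in> borel_measurable (F r) \<Longrightarrow> r \<le> s \<Longrightarrow> f \<in> borel_measurable (F s)" for f :: "'a \<Rightarrow> 'z::topological_space" and r s
    by (rule meas_lift[of "F r" "F s"]) (use spF Fmono in auto)
  have liftM: "f \<in> borel_measurable (F r) \<Longrightarrow> f \<in> borel_measurable M" for f :: "'a \<Rightarrow> 'z::topological_space" and r
    by (rule measurable_from_subalg[OF sub])
  have gen_sub: "sets (F (s - 1)) \<union> {c s -` A \<inter> space M | A. A \<in> sets borel} \<subseteq> Pow (space M)" for s
    using sets.sets_into_space[of _ "F (s - 1)"] spF by auto
  have spPC: "space (past_ctx M F c s) = space M" for s
    unfolding past_ctx_def by (simp add: space_measure_of_conv)
  have setsPC: "sets (past_ctx M F c s) = sigma_sets (space M) (sets (F (s - 1)) \<union> {c s -` A \<inter> space M | A. A \<in> sets borel})" for s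
    unfolding past_ctx_def by (rule sets_measure_of[OF gen_sub])
  have PC_F: "sets (past_ctx M F c s) \<subseteq> sets (F s)" if "s \<ge> 1" for s
  proof -
    have sa: "sigma_algebra (space M) (sets (F s))" using sets.sigma_algebra_axioms[of "F s"] spF by simp
    show ?thesis unfolding setsPC
    proof (rule sigma_algebra.sigma_sets_subset[OF sa])
      show "sets (F (s - 1)) \<union> {c s -` A \<inter> space M |A. A \<in> sets borel} \<subseteq> sets (F s)"
        using Fmono[of "s - 1" s] measurable_sets[OF cF[OF that]] spF by auto
    qed
  qed
  have F_PC: "sets (F (s - 1)) \<subseteq> sets (past_ctx M F c s)" for s
    unfolding setsPC by (rule order_trans[OF _ sigma_sets_superset_generator]) auto
  have c_PC: "c s \<in> borel_measurable (past_ctx M F c s)" if "s \<ge> 1" for s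
    unfolding measurable_def
  proof (intro CollectI conjI ballI)
    show "c s \<in> space (past_ctx M F c s) \<rightarrow> space borel" by simp
    fix A :: "(real^'k) set" assume "A \<in> sets borel"
    then show "c s -` A \<inter> space (past_ctx M F c s) \<in> sets (past_ctx M F c s)"
      unfolding spPC setsPC by (intro sigma_sets.Basic) auto
  qed
  have cM: "c s \<in> borel_measurable M" if "s \<ge> 1" for s using liftM[OF cF[OF that]] .
  have uM: "u s \<in> borel_measurable M" if "s \<ge> 1" for s using liftM[OF uF[OF that]] .
  have pM: "pbar s \<in> borel_measurable M" if "s \<ge> 1" for s
    by (rule liftM[of _ s], rule meas_lift[OF _ PC_F[OF that] pF[OF that]]) (simp add: spPC spF)
  obtain Bc0 where Bc0: "\<forall>s\<ge>1. \<forall>\<omega>\<in>space M. norm (c s \<omega>) \<le> Bc0" using cbnd by blast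
  obtain Bp0 where Bp0: "\<forall>s\<ge>1. \<forall>\<omega>\<in>space M. norm (pbar s \<omega>) \<le> Bp0" using pbnd by blast
  obtain Bu0 where Bu0: "\<forall>s\<ge>1. \<forall>\<omega>\<in>space M. norm (u s \<omega>) \<le> Bu0" using ubnd by blast
  define Bc where "Bc = max 1 Bc0"
  define Bp where "Bp = max 1 Bp0"
  define Bu where "Bu = max 1 Bu0"
  have Bc1: "Bc \<ge> 1" and Bp1: "Bp \<ge> 1" and Bu1: "Bu \<ge> 1" by (simp_all add: Bc_def Bp_def Bu_def)
  have cB: "norm (c s \<omega>) \<le> Bc" if "s \<ge> 1" "\<omega> \<in> space M" for s \<omega> using Bc0 that unfolding Bc_def by force
  have pB: "norm (pbar s \<omega>) \<le> Bp" if "s \<ge> 1" "\<omega> \<in> space M" for s \<omega> using Bp0 that unfolding Bp_def by force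
  have uB: "norm (u s \<omega>) \<le> Bu" if "s \<ge> 1" "\<omega> \<in> space M" for s \<omega> using Bu0 that unfolding Bu_def by force
  have ciB: "\<bar>c s \<omega> $ i\<bar> \<le> Bc" if "s \<ge> 1" "\<omega> \<in> space M" for s \<omega> i
    using comp_le_norm[of "c s \<omega>" i] cB[OF that] by linarith
  have piB: "\<bar>pbar s \<omega> $ i\<bar> \<le> Bp" if "s \<ge> 1" "\<omega> \<in> space M" for s \<omega> i
    using comp_le_norm[of "pbar s \<omega>" i] pB[OF that] by linarith
  have uiB: "\<bar>u s \<omega> $ i\<bar> \<le> Bu" if "s \<ge> 1" "\<omega> \<in> space M" for s \<omega> i
    using comp_le_norm[of "u s \<omega>" i] uB[OF that] by linarith
  have yiB: "\<bar>stack (pbar s \<omega>) (c s \<omega>) $ i\<bar> \<le> Bp + Bc" if "s \<ge> 1" "\<omega> \<in> space M" for s \<omega> i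
  proof (cases i)
    case (Inl j) then show ?thesis using piB[OF that, of j] Bc1 by (simp add: stack_def)
  next
    case (Inr j) then show ?thesis using ciB[OF that, of j] Bp1 by (simp add: stack_def)
  qed
  define Sc where "Sc = P.expectation (\<lambda>\<omega>. outer (c 1 \<omega>))"
  define Su where "Su = P.expectation (\<lambda>\<omega>. outer (u 1 \<omega>))"
  obtain lc where lc: "lc > 0" and lcq: "\<And>w. w \<bullet> (Sc *v w) \<ge> lc * (w \<bullet> w)"
    using pd_bound[of Sc] cpd unfolding Sc_def by blast
  obtain lu where lu: "lu > 0" and luq: "\<And>w. w \<bullet> (Su *v w) \<ge> lu * (w \<bullet> w)"
    using pd_bound[of Su] upd unfolding Su_def by blast
  have Scint: "integrable M (\<lambda>\<omega>. outer (c 1 \<omega>))" by (rule P.pd_integrable) (use cpd in simp)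
  have Suint: "integrable M (\<lambda>\<omega>. outer (u 1 \<omega>))" by (rule P.pd_integrable) (use upd in simp)
  have Sc_ent: "Sc $ i $ j = P.expectation (\<lambda>\<omega>. c 1 \<omega> $ i * c 1 \<omega> $ j)" for i j
    using P.exp_entry[OF Scint, of i j] by (simp add: Sc_def outer_def)
  have Su_ent: "Su $ i $ j = P.expectation (\<lambda>\<omega>. u 1 \<omega> $ i * u 1 \<omega> $ j)" for i j
    using P.exp_entry[OF Suint, of i j] by (simp add: Su_def outer_def)
  have dist_c: "P.expectation (\<lambda>\<omega>. f (c s \<omega>)) = P.expectation (\<lambda>\<omega>. f (c 1 \<omega>))"
    if "s \<ge> 1" "f \<in> borel_measurable borel" for s and f :: "real^'k \<Rightarrow> real"
    using integral_distr[OF cM[OF that(1)] that(2)] integral_distr[OF cM[of 1] that(2)] cdist[OF that(1)] by simp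
  have dist_u: "P.expectation (\<lambda>\<omega>. f (u s \<omega>)) = P.expectation (\<lambda>\<omega>. f (u 1 \<omega>))"
    if "s \<ge> 1" "f \<in> borel_measurable borel" for s and f :: "real^'m \<Rightarrow> real"
    using integral_distr[OF uM[OF that(1)] that(2)] integral_distr[OF uM[of 1] that(2)] udist[OF that(1)] by simp
  have uint: "integrable M (u 1)"
    by (rule P.integrable_const_bound[where B=Bu]) (use uM uB in auto)
  have umean_j: "P.expectation (\<lambda>\<omega>. u 1 \<omega> $ j) = 0" for j
    using P.exp_comp[OF uint, of j] umean by simp
  have intb: "integrable M f" if "f \<in> borel_measurable M" "\<And>\<omega>. \<omega> \<in> space M \<Longrightarrow> \<bar>f \<omega>\<bar> \<le> C" for f and C :: real
    using that by (intro P.integrable_const_bound[where B=C]) auto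
  define \<alpha> where "\<alpha> s = real s powr (-\<eta>)" for s :: nat
  have a01: "0 \<le> \<alpha> s \<and> \<alpha> s \<le> 1" for s
  proof (cases "s \<ge> 1")
    case True then show ?thesis using alpha_le1[OF True eta0] by (simp add: \<alpha>_def)
  next
    case False then have "s = 0" by simp
    then show ?thesis by (simp add: \<alpha>_def)
  qed
  have asq: "(\<alpha> s)^2 \<le> 1" for s using a01[of s] by (simp add: power_le_one)
  define W where "W k = (\<Sum>s\<in>{1..2^k}. (\<alpha> s)^2)" for k :: nat
  have Wpos: "W k > 0" for k using W_pos[OF eta0, of k] unfolding W_def \<alpha>_def .
  have Wsum: "summable (\<lambda>k. 1 / (W k)^2)" using W_summable[OF eta0 eta1] unfolding W_def \<alpha>_def .
  have one_sum: "(\<Sum>s\<in>{1..(2::nat)^k}. (1::real)) = 2^k" for k by simp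
  have summ1: "summable (\<lambda>k. 1 / (\<Sum>s\<in>{1..(2::nat)^k}. (1::real))^2)"
  proof -
    have "(\<lambda>k. 1 / (\<Sum>s\<in>{1..(2::nat)^k}. (1::real))^2) = (\<lambda>k. (1/4)^k)"
    proof (rule ext)
      fix k :: nat
      have "(2::real)^k * 2^k = 4^k" by (simp flip: power_mult_distrib)
      then show "1 / (\<Sum>s\<in>{1..(2::nat)^k}. (1::real))^2 = (1/4)^k"
        by (simp add: one_sum power2_eq_square power_divide)
    qed
    then show ?thesis by (simp add: summable_geometric)
  qed
  have pos1: "(\<Sum>s\<in>{1..(2::nat)^k}. (1::real)) > 0" for k by (simp add: one_sum)
  define e1 where "e1 = lc / 2 / CARD('k)"
  have e1p: "e1 > 0" using lc by (simp add: e1_def)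
  define D1 where "D1 i j s \<omega> = (if 1 \<le> s then c s \<omega> $ i * c s \<omega> $ j - Sc $ i $ j else 0)" for i j s \<omega>
  have AE1: "AE \<omega> in M. eventually (\<lambda>k. \<bar>\<Sum>s\<in>{1..2^k}. D1 i j s \<omega>\<bar> < e1 * (\<Sum>s\<in>{1..(2::nat)^k}. (1::real))) sequentially" for i j
  proof (rule P.mart_slln[where H="\<lambda>s. F (s - 1)" and b="\<lambda>_. Bc^2 + \<bar>Sc$i$j\<bar>" and \<beta>="(Bc^2 + \<bar>Sc$i$j\<bar>)^2" and a="\<lambda>_. 1"])
    fix s show "D1 i j s \<in> borel_measurable M"
      unfolding D1_def by (cases "1 \<le> s") (auto intro!: borel_measurable_diff borel_measurable_times bm_vec_nth cM)
  next
    fix s \<omega> assume \<omega>: "\<omega> \<in> space M"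
    show "\<bar>D1 i j s \<omega>\<bar> \<le> Bc^2 + \<bar>Sc$i$j\<bar>"
    proof (cases "1 \<le> s")
      case True
      have "\<bar>c s \<omega> $ i * c s \<omega> $ j\<bar> \<le> Bc * Bc" unfolding abs_mult
        by (rule mult_mono) (use ciB[OF True \<omega>] Bc1 in auto)
      then show ?thesis using True by (simp add: D1_def power2_eq_square)
    qed (simp add: D1_def)
  next
    fix r s :: nat assume rs: "1 \<le> r" "r < s"
    have cr: "c r \<in> borel_measurable (F (s - 1))" by (rule liftF[OF cF[OF rs(1)]]) (use rs in simp)
    show "D1 i j r \<in> borel_measurable (F (s - 1))"
      unfolding D1_def using rs cr by (auto intro!: borel_measurable_diff borel_measurable_times bm_vec_nth)
  next
    fix s :: nat and g :: "'a \<Rightarrow> real" assume s: "1 \<le> s" and g: "g \<in> borel_measurable (F (s - 1))" and gb: "\<exists>B. \<forall>\<omega>\<in>space M. \<bar>g \<omega>\<bar> \<le> B"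
    obtain B where B: "\<forall>\<omega>\<in>space M. \<bar>g \<omega>\<bar> \<le> B" using gb by blast
    define f where "f z = z $ i * z $ j - Sc $ i $ j" for z :: "real^'k"
    have fm: "f \<in> borel_measurable borel" unfolding f_def
      by (intro borel_measurable_diff borel_measurable_times nth_bm borel_measurable_const)
    have gM: "g \<in> borel_measurable M" by (rule liftM[OF g])
    have fcs: "(\<lambda>\<omega>. f (c s \<omega>)) \<in> borel_measurable M" by (rule measurable_compose[OF cM[OF s] fm])
    have fint: "integrable M (\<lambda>\<omega>. f (c s \<omega>))"
    proof (rule intb[OF fcs])
      fix \<omega> assume \<omega>: "\<omega> \<in> space M"
      have "\<bar>c s \<omega> $ i * c s \<omega> $ j\<bar> \<le> Bc * Bc" unfolding abs_mult
        by (rule mult_mono) (use ciB[OF s \<omega>] Bc1 in auto)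
      then show "\<bar>f (c s \<omega>)\<bar> \<le> Bc * Bc + \<bar>Sc $ i $ j\<bar>" unfolding f_def by linarith
    qed
    have gint: "integrable M g" by (rule intb[OF gM]) (use B in auto)
    have c1int: "integrable M (\<lambda>\<omega>. c 1 \<omega> $ i * c 1 \<omega> $ j)"
    proof (rule intb)
      show "(\<lambda>\<omega>. c 1 \<omega> $ i * c 1 \<omega> $ j) \<in> borel_measurable M"
        by (intro borel_measurable_times bm_vec_nth cM) simp_all
      fix \<omega> assume \<omega>: "\<omega> \<in> space M"
      show "\<bar>c 1 \<omega> $ i * c 1 \<omega> $ j\<bar> \<le> Bc * Bc" unfolding abs_mult
        by (rule mult_mono) (use ciB[of 1 \<omega>] \<omega> Bc1 in auto)
    qed
    have Ef: "P.expectation (\<lambda>\<omega>. f (c s \<omega>)) = 0"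
    proof -
      have "P.expectation (\<lambda>\<omega>. f (c s \<omega>)) = P.expectation (\<lambda>\<omega>. f (c 1 \<omega>))" by (rule dist_c[OF s fm])
      also have "\<dots> = P.expectation (\<lambda>\<omega>. c 1 \<omega> $ i * c 1 \<omega> $ j) - Sc $ i $ j"
        unfolding f_def using c1int by (simp add: Bochner_Integration.integral_diff P.prob_space)
      finally show ?thesis using Sc_ent by simp
    qed
    have "P.expectation (\<lambda>\<omega>. g \<omega> * D1 i j s \<omega>) = P.expectation (\<lambda>\<omega>. g \<omega> * f (c s \<omega>))"
      using s by (simp add: D1_def f_def)
    also have "\<dots> = P.expectation g * P.expectation (\<lambda>\<omega>. f (c s \<omega>))"
      by (rule P.indep_prod[OF cind[OF s] spF g gM cM[OF s] fm gint fint])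
    finally show "P.expectation (\<lambda>\<omega>. g \<omega> * D1 i j s \<omega>) = 0" using Ef by simp
  next
    fix s show "(Bc^2 + \<bar>Sc$i$j\<bar>)^2 \<le> (Bc^2 + \<bar>Sc$i$j\<bar>)^2 * 1" by simp
  qed (use pos1 summ1 e1p in auto)
  define e2 where "e2 = lu / 2 / CARD('m)"
  have e2p: "e2 > 0" using lu by (simp add: e2_def)
  define D2 where "D2 i j s \<omega> = (if 1 \<le> s then (\<alpha> s)^2 * (u s \<omega> $ i * u s \<omega> $ j - Su $ i $ j) else 0)" for i j s \<omega>
  have AE2: "AE \<omega> in M. eventually (\<lambda>k. \<bar>\<Sum>s\<in>{1..2^k}. D2 i j s \<omega>\<bar> < e2 * W k) sequentially" for i j
    unfolding W_def
  proof (rule P.mart_slln[where H="\<lambda>s. F (s - 1)" and b="\<lambda>s. (\<alpha> s)^2 * (Bu^2 + \<bar>Su$i$j\<bar>)" and \<beta>="(Bu^2 + \<bar>Su$i$j\<bar>)^2" and a="\<lambda>s. (\<alpha> s)^2"])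
    fix s show "D2 i j s \<in> borel_measurable M"
      unfolding D2_def by (cases "1 \<le> s") (auto intro!: borel_measurable_diff borel_measurable_times bm_vec_nth uM)
  next
    fix s \<omega> assume \<omega>: "\<omega> \<in> space M"
    show "\<bar>D2 i j s \<omega>\<bar> \<le> (\<alpha> s)^2 * (Bu^2 + \<bar>Su$i$j\<bar>)"
    proof (cases "1 \<le> s")
      case True
      have "\<bar>u s \<omega> $ i * u s \<omega> $ j\<bar> \<le> Bu * Bu" unfolding abs_mult
        by (rule mult_mono) (use uiB[OF True \<omega>] Bu1 in auto)
      then have "\<bar>u s \<omega> $ i * u s \<omega> $ j - Su $ i $ j\<bar> \<le> Bu^2 + \<bar>Su$i$j\<bar>" by (simp add: power2_eq_square)
      then show ?thesis using True by (simp add: D2_def abs_mult mult_left_mono)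
    qed (simp add: D2_def)
  next
    fix r s :: nat assume rs: "1 \<le> r" "r < s"
    have ur: "u r \<in> borel_measurable (F (s - 1))" by (rule liftF[OF uF[OF rs(1)]]) (use rs in simp)
    show "D2 i j r \<in> borel_measurable (F (s - 1))"
      unfolding D2_def using rs ur by (auto intro!: borel_measurable_diff borel_measurable_times bm_vec_nth)
  next
    fix s :: nat and g :: "'a \<Rightarrow> real" assume s: "1 \<le> s" and g: "g \<in> borel_measurable (F (s - 1))" and gb: "\<exists>B. \<forall>\<omega>\<in>space M. \<bar>g \<omega>\<bar> \<le> B"
    obtain B where B: "\<forall>\<omega>\<in>space M. \<bar>g \<omega>\<bar> \<le> B" using gb by blast
    define f where "f z = z $ i * z $ j - Su $ i $ j" for z :: "real^'m"
    have fm: "f \<in> borel_measurable borel" unfolding f_def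
      by (intro borel_measurable_diff borel_measurable_times nth_bm borel_measurable_const)
    have gM: "g \<in> borel_measurable M" by (rule liftM[OF g])
    have gPC: "g \<in> borel_measurable (past_ctx M F c s)"
      by (rule meas_lift[OF _ F_PC g]) (simp add: spPC spF)
    have fus: "(\<lambda>\<omega>. f (u s \<omega>)) \<in> borel_measurable M" by (rule measurable_compose[OF uM[OF s] fm])
    have fint: "integrable M (\<lambda>\<omega>. f (u s \<omega>))"
    proof (rule intb[OF fus])
      fix \<omega> assume \<omega>: "\<omega> \<in> space M"
      have "\<bar>u s \<omega> $ i * u s \<omega> $ j\<bar> \<le> Bu * Bu" unfolding abs_mult
        by (rule mult_mono) (use uiB[OF s \<omega>] Bu1 in auto)
      then show "\<bar>f (u s \<omega>)\<bar> \<le> Bu * Bu + \<bar>Su $ i $ j\<bar>" unfolding f_def by linarith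
    qed
    have gint: "integrable M g" by (rule intb[OF gM]) (use B in auto)
    have u1int: "integrable M (\<lambda>\<omega>. u 1 \<omega> $ i * u 1 \<omega> $ j)"
    proof (rule intb)
      show "(\<lambda>\<omega>. u 1 \<omega> $ i * u 1 \<omega> $ j) \<in> borel_measurable M"
        by (intro borel_measurable_times bm_vec_nth uM) simp_all
      fix \<omega> assume \<omega>: "\<omega> \<in> space M"
      show "\<bar>u 1 \<omega> $ i * u 1 \<omega> $ j\<bar> \<le> Bu * Bu" unfolding abs_mult
        by (rule mult_mono) (use uiB[of 1 \<omega>] \<omega> Bu1 in auto)
    qed
    have Ef: "P.expectation (\<lambda>\<omega>. f (u s \<omega>)) = 0"
    proof -
      have "P.expectation (\<lambda>\<omega>. f (u s \<omega>)) = P.expectation (\<lambda>\<omega>. f (u 1 \<omega>))" by (rule dist_u[OF s fm])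
      also have "\<dots> = P.expectation (\<lambda>\<omega>. u 1 \<omega> $ i * u 1 \<omega> $ j) - Su $ i $ j"
        unfolding f_def using u1int by (simp add: Bochner_Integration.integral_diff P.prob_space)
      finally show ?thesis using Su_ent by simp
    qed
    have "P.expectation (\<lambda>\<omega>. g \<omega> * D2 i j s \<omega>) = P.expectation (\<lambda>\<omega>. (\<alpha> s)^2 * (g \<omega> * f (u s \<omega>)))"
      using s by (simp add: D2_def f_def mult_ac)
    also have "\<dots> = (\<alpha> s)^2 * P.expectation (\<lambda>\<omega>. g \<omega> * f (u s \<omega>))" by simp
    also have "P.expectation (\<lambda>\<omega>. g \<omega> * f (u s \<omega>)) = P.expectation g * P.expectation (\<lambda>\<omega>. f (u s \<omega>))"
      by (rule P.indep_prod[OF uind[OF s] spPC gPC gM uM[OF s] fm gint fint])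
    finally show "P.expectation (\<lambda>\<omega>. g \<omega> * D2 i j s \<omega>) = 0" using Ef by simp
  next
    fix s
    have "((\<alpha> s)^2)^2 \<le> (\<alpha> s)^2" using asq[of s] by (simp add: power2_eq_square mult_left_le)
    then show "((\<alpha> s)^2 * (Bu^2 + \<bar>Su$i$j\<bar>))^2 \<le> (Bu^2 + \<bar>Su$i$j\<bar>)^2 * (\<alpha> s)^2"
    proof -
      have "((\<alpha> s)^2 * (Bu^2 + \<bar>Su$i$j\<bar>))^2 = ((\<alpha> s)^2)^2 * (Bu^2 + \<bar>Su$i$j\<bar>)^2" by (simp add: power_mult_distrib)
      also have "\<dots> \<le> (\<alpha> s)^2 * (Bu^2 + \<bar>Su$i$j\<bar>)^2" by (rule mult_right_mono) (use \<open>((\<alpha> s)^2)^2 \<le> (\<alpha> s)^2\<close> in simp_all)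
      finally show ?thesis by (simp add: mult.commute)
    qed
  qed (use Wpos Wsum e2p in \<open>auto simp: W_def\<close>)
  define Bq where "Bq = Bp + Bu"
  define e3 where "e3 = lu / (4 * (1 + 8 * Bq^2 / lc)) / (CARD('m) + CARD('m+'k))"
  have e3p: "e3 > 0"
  proof -
    have "0 < 1 + 8 * Bq^2 / lc" using lc by (simp add: add_pos_nonneg)
    moreover have "(0::real) < CARD('m) + CARD('m+'k)" by (simp add: add_pos_pos)
    ultimately show ?thesis using lu unfolding e3_def by (intro divide_pos_pos mult_pos_pos) auto
  qed
  define D3 where "D3 i j s \<omega> = (if 1 \<le> s then \<alpha> s * (stack (pbar s \<omega>) (c s \<omega>) $ i * u s \<omega> $ j) else 0)" for i j s \<omega>
  have AE3: "AE \<omega> in M. eventually (\<lambda>k. \<bar>\<Sum>s\<in>{1..2^k}. D3 i j s \<omega>\<bar> < e3 * W k) sequentially" for i j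
    unfolding W_def
  proof (rule P.mart_slln[where H="\<lambda>s. F (s - 1)" and b="\<lambda>s. \<alpha> s * ((Bp + Bc) * Bu)" and \<beta>="((Bp + Bc) * Bu)^2" and a="\<lambda>s. (\<alpha> s)^2"])
    fix s show "D3 i j s \<in> borel_measurable M"
    proof (cases "1 \<le> s")
      case True
      have "(\<lambda>\<omega>. \<alpha> s * (stack (pbar s \<omega>) (c s \<omega>) $ i * u s \<omega> $ j)) \<in> borel_measurable M"
        by (intro borel_measurable_times borel_measurable_const stack_bm[OF pM[OF True] cM[OF True]] bm_vec_nth[OF uM[OF True]])
      moreover have "D3 i j s = (\<lambda>\<omega>. \<alpha> s * (stack (pbar s \<omega>) (c s \<omega>) $ i * u s \<omega> $ j))"
        using True by (simp add: D3_def fun_eq_iff)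
      ultimately show ?thesis by simp
    next
      case False
      then have "D3 i j s = (\<lambda>\<omega>. 0)" by (simp add: D3_def fun_eq_iff)
      then show ?thesis by simp
    qed
  next
    fix s \<omega> assume \<omega>: "\<omega> \<in> space M"
    show "\<bar>D3 i j s \<omega>\<bar> \<le> \<alpha> s * ((Bp + Bc) * Bu)"
    proof (cases "1 \<le> s")
      case True
      have "\<bar>stack (pbar s \<omega>) (c s \<omega>) $ i * u s \<omega> $ j\<bar> \<le> (Bp + Bc) * Bu" unfolding abs_mult
        by (rule mult_mono) (use yiB[OF True \<omega>] uiB[OF True \<omega>] Bu1 Bc1 Bp1 in auto)
      then show ?thesis using True a01[of s] by (simp add: D3_def abs_mult mult_left_mono)
    qed (use a01[of s] Bp1 Bc1 Bu1 in \<open>simp add: D3_def\<close>)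
  next
    fix r s :: nat assume rs: "1 \<le> r" "r < s"
    have ur: "u r \<in> borel_measurable (F (s - 1))" by (rule liftF[OF uF[OF rs(1)]]) (use rs in simp)
    have cr: "c r \<in> borel_measurable (F (s - 1))" by (rule liftF[OF cF[OF rs(1)]]) (use rs in simp)
    have pr: "pbar r \<in> borel_measurable (F (s - 1))"
      by (rule liftF[of _ r], rule meas_lift[OF _ PC_F[OF rs(1)] pF[OF rs(1)]]) (use rs in \<open>simp_all add: spPC spF\<close>)
    show "D3 i j r \<in> borel_measurable (F (s - 1))"
    proof -
      have "(\<lambda>\<omega>. \<alpha> r * (stack (pbar r \<omega>) (c r \<omega>) $ i * u r \<omega> $ j)) \<in> borel_measurable (F (s - 1))"
        by (intro borel_measurable_times borel_measurable_const stack_bm[OF pr cr] bm_vec_nth[OF ur])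
      moreover have "D3 i j r = (\<lambda>\<omega>. \<alpha> r * (stack (pbar r \<omega>) (c r \<omega>) $ i * u r \<omega> $ j))"
        using rs by (simp add: D3_def fun_eq_iff)
      ultimately show ?thesis by simp
    qed
  next
    fix s :: nat and g :: "'a \<Rightarrow> real" assume s: "1 \<le> s" and g: "g \<in> borel_measurable (F (s - 1))" and gb: "\<exists>B. \<forall>\<omega>\<in>space M. \<bar>g \<omega>\<bar> \<le> B"
    obtain B where B: "\<forall>\<omega>\<in>space M. \<bar>g \<omega>\<bar> \<le> B" using gb by blast
    define f where "f z = z $ j" for z :: "real^'m"
    have fm: "f \<in> borel_measurable borel" unfolding f_def by (rule nth_bm)
    have gPC: "g \<in> borel_measurable (past_ctx M F c s)"
      by (rule meas_lift[OF _ F_PC g]) (simp add: spPC spF)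
    define X where "X \<omega> = g \<omega> * stack (pbar s \<omega>) (c s \<omega>) $ i" for \<omega>
    have XPC: "X \<in> borel_measurable (past_ctx M F c s)"
      unfolding X_def by (intro borel_measurable_times gPC stack_bm pF[OF s] c_PC[OF s])
    have XM: "X \<in> borel_measurable M"
      unfolding X_def by (intro borel_measurable_times liftM[OF g] stack_bm pM[OF s] cM[OF s])
    have fus: "(\<lambda>\<omega>. f (u s \<omega>)) \<in> borel_measurable M" by (rule measurable_compose[OF uM[OF s] fm])
    have fint: "integrable M (\<lambda>\<omega>. f (u s \<omega>))"
      by (rule intb[OF fus]) (use uiB[OF s] in \<open>auto simp: f_def\<close>)
    have Xint: "integrable M X"
    proof (rule intb[OF XM])
      fix \<omega> assume \<omega>: "\<omega> \<in> space M"
      show "\<bar>X \<omega>\<bar> \<le> B * (Bp + Bc)" unfolding X_def abs_mult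
        by (rule mult_mono) (use B yiB[OF s \<omega>] \<omega> in auto)
    qed
    have Ef: "P.expectation (\<lambda>\<omega>. f (u s \<omega>)) = 0"
      using dist_u[OF s fm] umean_j[of j] by (simp add: f_def)
    have "P.expectation (\<lambda>\<omega>. g \<omega> * D3 i j s \<omega>) = P.expectation (\<lambda>\<omega>. \<alpha> s * (X \<omega> * f (u s \<omega>)))"
      using s by (simp add: D3_def f_def X_def mult_ac)
    also have "\<dots> = \<alpha> s * P.expectation (\<lambda>\<omega>. X \<omega> * f (u s \<omega>))" by simp
    also have "P.expectation (\<lambda>\<omega>. X \<omega> * f (u s \<omega>)) = P.expectation X * P.expectation (\<lambda>\<omega>. f (u s \<omega>))"
      by (rule P.indep_prod[OF uind[OF s] spPC XPC XM uM[OF s] fm Xint fint])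
    finally show "P.expectation (\<lambda>\<omega>. g \<omega> * D3 i j s \<omega>) = 0" using Ef by simp
  next
    fix s show "(\<alpha> s * ((Bp + Bc) * Bu))^2 \<le> ((Bp + Bc) * Bu)^2 * (\<alpha> s)^2"
      by (simp add: power_mult_distrib)
  qed (use Wpos Wsum e3p in \<open>auto simp: W_def\<close>)
  define K0 where "K0 = min (Bq^2 / (1 + 8 * Bq^2 / lc)) (lu / (4 * (1 + 8 * Bq^2 / lc)))"
  have K0p: "K0 > 0"
  proof -
    have d: "0 < 1 + 8 * Bq^2 / lc" using lc by (simp add: add_pos_nonneg)
    have "Bq > 0" using Bp1 Bu1 by (simp add: Bq_def)
    then show ?thesis unfolding K0_def using d lu by simp
  qed
  have AEall: "AE \<omega> in M. \<omega> \<in> space M \<and>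
      (\<forall>i j. eventually (\<lambda>k. \<bar>\<Sum>s\<in>{1..2^k}. D1 i j s \<omega>\<bar> < e1 * (\<Sum>s\<in>{1..(2::nat)^k}. (1::real))) sequentially) \<and>
      (\<forall>i j. eventually (\<lambda>k. \<bar>\<Sum>s\<in>{1..2^k}. D2 i j s \<omega>\<bar> < e2 * W k) sequentially) \<and>
      (\<forall>i j. eventually (\<lambda>k. \<bar>\<Sum>s\<in>{1..2^k}. D3 i j s \<omega>\<bar> < e3 * W k) sequentially)"
    using AE_space AE_all2[OF AE1] AE_all2[OF AE2] AE_all2[OF AE3] by (intro eventually_conj) auto
  then show ?thesis
  proof (rule eventually_mono)
    fix \<omega> assume H: "\<omega> \<in> space M \<and>
      (\<forall>i j. eventually (\<lambda>k. \<bar>\<Sum>s\<in>{1..2^k}. D1 i j s \<omega>\<bar> < e1 * (\<Sum>s\<in>{1..(2::nat)^k}. (1::real))) sequentially) \<and>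
      (\<forall>i j. eventually (\<lambda>k. \<bar>\<Sum>s\<in>{1..2^k}. D2 i j s \<omega>\<bar> < e2 * W k) sequentially) \<and>
      (\<forall>i j. eventually (\<lambda>k. \<bar>\<Sum>s\<in>{1..2^k}. D3 i j s \<omega>\<bar> < e3 * W k) sequentially)"
    have \<omega>: "\<omega> \<in> space M" using H by blast
    have "eventually (\<lambda>k. (\<forall>i j. \<bar>\<Sum>s\<in>{1..2^k}. D1 i j s \<omega>\<bar> < e1 * (\<Sum>s\<in>{1..(2::nat)^k}. (1::real)))
        \<and> (\<forall>i j. \<bar>\<Sum>s\<in>{1..2^k}. D2 i j s \<omega>\<bar> < e2 * W k)
        \<and> (\<forall>i j. \<bar>\<Sum>s\<in>{1..2^k}. D3 i j s \<omega>\<bar> < e3 * W k)) sequentially"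
      using H by (intro eventually_conj ev_all2) auto
    then obtain k0 where k0: "\<And>k. k \<ge> k0 \<Longrightarrow> (\<forall>i j. \<bar>\<Sum>s\<in>{1..2^k}. D1 i j s \<omega>\<bar> < e1 * (\<Sum>s\<in>{1..(2::nat)^k}. (1::real)))
        \<and> (\<forall>i j. \<bar>\<Sum>s\<in>{1..2^k}. D2 i j s \<omega>\<bar> < e2 * W k)
        \<and> (\<forall>i j. \<bar>\<Sum>s\<in>{1..2^k}. D3 i j s \<omega>\<bar> < e3 * W k)"
      unfolding eventually_sequentially by blast
    define Q where "Q t v = v \<bullet> ((\<Sum>s\<in>{1..t}. outer (stack (pbar s \<omega> + \<alpha> s *\<^sub>R u s \<omega>) (c s \<omega>))) *v v)" for t v
    have atk: "Q (2^k) v \<ge> K0 * W k * (v \<bullet> v)" if k: "k \<ge> k0" for k v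
    proof -
      let ?T = "{1..(2::nat)^k}"
      have ks: "\<And>s. s \<in> ?T \<Longrightarrow> 1 \<le> s" by simp
      note kk = k0[OF k]
      show ?thesis unfolding Q_def K0_def
      proof (rule core[where ea=e1 and eb=e2 and ec=e3])
        show "finite ?T" by simp
        show "\<And>s. s \<in> ?T \<Longrightarrow> 0 \<le> \<alpha> s \<and> \<alpha> s \<le> 1" using a01 by blast
        show "\<And>s. s \<in> ?T \<Longrightarrow> norm (pbar s \<omega> + \<alpha> s *\<^sub>R u s \<omega>) \<le> Bq"
        proof -
          fix s assume "s \<in> ?T"
          then have s: "s \<ge> 1" by simp
          have "norm (pbar s \<omega> + \<alpha> s *\<^sub>R u s \<omega>) \<le> norm (pbar s \<omega>) + \<bar>\<alpha> s\<bar> * norm (u s \<omega>)"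
            using norm_triangle_ineq[of "pbar s \<omega>" "\<alpha> s *\<^sub>R u s \<omega>"] by simp
          also have "\<dots> \<le> Bp + 1 * Bu"
            using pB[OF s \<omega>] uB[OF s \<omega>] a01[of s] by (intro add_mono mult_mono) auto
          finally show "norm (pbar s \<omega> + \<alpha> s *\<^sub>R u s \<omega>) \<le> Bq" by (simp add: Bq_def)
        qed
        show "Bq > 0" using Bp1 Bu1 by (simp add: Bq_def)
        show "lc > 0" "lu > 0" by (fact lc, fact lu)
        show "\<And>w. w \<bullet> (Sc *v w) \<ge> lc * (w \<bullet> w)" by (fact lcq)
        show "\<And>w. w \<bullet> (Su *v w) \<ge> lu * (w \<bullet> w)" by (fact luq)
        show "W k = (\<Sum>s\<in>?T. (\<alpha> s)^2)" by (simp add: W_def)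
        show "e1 * CARD('k) \<le> lc / 2" by (simp add: e1_def)
        show "e2 * CARD('m) \<le> lu / 2" by (simp add: e2_def)
        show "e3 * (CARD('m) + CARD('m+'k)) \<le> lu / (4 * (1 + 8 * Bq^2 / lc))"
        proof -
          have "(0::real) < CARD('m) + CARD('m+'k)" by (simp add: add_pos_pos)
          then show ?thesis by (simp add: e3_def)
        qed
        show "e3 \<ge> 0" using e3p by simp
        fix i j
        have "(\<Sum>s\<in>?T. D1 i j s \<omega>) = (\<Sum>s\<in>?T. c s \<omega> $ i * c s \<omega> $ j - Sc $ i $ j)"
          by (rule sum.cong) (auto simp: D1_def)
        also have "\<dots> = (\<Sum>s\<in>?T. c s \<omega> $ i * c s \<omega> $ j) - real (card ?T) * Sc $ i $ j"
          by (simp add: sum_subtractf)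
        finally have e: "(\<Sum>s\<in>?T. D1 i j s \<omega>) = (\<Sum>s\<in>?T. c s \<omega> $ i * c s \<omega> $ j) - real (card ?T) * Sc $ i $ j" .
        have "(\<Sum>s\<in>?T. (1::real)) = real (card ?T)" by simp
        then show "\<bar>(\<Sum>s\<in>?T. c s \<omega> $ i * c s \<omega> $ j) - real (card ?T) * Sc $ i $ j\<bar> \<le> e1 * real (card ?T)"
          using kk e by (metis less_imp_le)
      next
        fix i j
        have "(\<Sum>s\<in>?T. D2 i j s \<omega>) = (\<Sum>s\<in>?T. (\<alpha> s)^2 * (u s \<omega> $ i * u s \<omega> $ j) - (\<alpha> s)^2 * Su $ i $ j)"
          by (rule sum.cong) (auto simp: D2_def right_diff_distrib)
        also have "\<dots> = (\<Sum>s\<in>?T. (\<alpha> s)^2 * (u s \<omega> $ i * u s \<omega> $ j)) - W k * Su $ i $ j"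
          by (simp add: sum_subtractf sum_distrib_right W_def)
        finally show "\<bar>(\<Sum>s\<in>?T. (\<alpha> s)^2 * (u s \<omega> $ i * u s \<omega> $ j)) - W k * Su $ i $ j\<bar> \<le> e2 * W k"
          using kk by (metis less_imp_le)
      next
        fix i j
        have "(\<Sum>s\<in>?T. D3 i j s \<omega>) = (\<Sum>s\<in>?T. \<alpha> s * (stack (pbar s \<omega>) (c s \<omega>) $ i * u s \<omega> $ j))"
          by (rule sum.cong) (auto simp: D3_def)
        then show "\<bar>\<Sum>s\<in>?T. \<alpha> s * (stack (pbar s \<omega>) (c s \<omega>) $ i * u s \<omega> $ j)\<bar> \<le> e3 * W k"
          using kk by (metis less_imp_le)
      qed
    qed
    define Wt where "Wt t = (\<Sum>s\<in>{1..t}. (\<alpha> s)^2)" for t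
    have main: "Q t v \<ge> K0 / 2 * Wt t * (v \<bullet> v)" if t: "t \<ge> 2^k0" for t v
    proof -
      have "(1::nat) \<le> 2^k0" by simp
      then have "t \<ge> 1" using t by linarith
      then obtain k where k: "2^k \<le> t" "t < 2^(k+1)" using ex_power_ivl1[of 2 t] by auto
      have kk0: "k \<ge> k0"
      proof (rule ccontr)
        assume "\<not> k0 \<le> k"
        then have "k + 1 \<le> k0" by simp
        then have "(2::nat)^(k+1) \<le> 2^k0" by (rule power_increasing) simp
        then show False using k t by simp
      qed
      have Wt_le: "Wt t \<le> 2 * W k"
      proof -
        have "Wt t \<le> Wt (2 * 2^k)" unfolding Wt_def \<alpha>_def by (rule W_mono) (use k in simp)
        also have "\<dots> \<le> 2 * W k" unfolding Wt_def W_def \<alpha>_def by (rule W_double[OF eta0])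
        finally show ?thesis .
      qed
      have "K0 / 2 * Wt t * (v \<bullet> v) \<le> K0 / 2 * (2 * W k) * (v \<bullet> v)"
        using Wt_le K0p by (intro mult_right_mono mult_left_mono) auto
      also have "\<dots> = K0 * W k * (v \<bullet> v)" by simp
      also have "\<dots> \<le> Q (2^k) v" by (rule atk[OF kk0])
      also have "\<dots> \<le> Q t v" unfolding Q_def by (rule Q_mono) (use k in auto)
      finally show ?thesis .
    qed
    show "\<exists>K>0. \<exists>T0. \<forall>t\<ge>T0.
           min_eig (\<Sum>s\<in>{1..t}. outer (stack (pbar s \<omega> + (real s powr (-\<eta>)) *\<^sub>R u s \<omega>) (c s \<omega>)))
             \<ge> K * (\<Sum>s\<in>{1..t}. (real s powr (-\<eta>))\<^sup>2)"
    proof (intro exI conjI allI impI)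
      show "K0 / 2 > 0" using K0p by simp
      fix t :: nat assume t: "t \<ge> 2^k0"
      show "min_eig (\<Sum>s\<in>{1..t}. outer (stack (pbar s \<omega> + (real s powr (-\<eta>)) *\<^sub>R u s \<omega>) (c s \<omega>)))
             \<ge> K0 / 2 * (\<Sum>s\<in>{1..t}. (real s powr (-\<eta>))\<^sup>2)"
      proof (rule min_eig_ge)
        show "transpose (\<Sum>s\<in>{1..t}. outer (stack (pbar s \<omega> + (real s powr (-\<eta>)) *\<^sub>R u s \<omega>) (c s \<omega>)))
          = (\<Sum>s\<in>{1..t}. outer (stack (pbar s \<omega> + (real s powr (-\<eta>)) *\<^sub>R u s \<omega>) (c s \<omega>)))"
          by (rule transpose_outer_sum)
        fix v
        show "K0 / 2 * (\<Sum>s\<in>{1..t}. (real s powr (-\<eta>))\<^sup>2) * (v \<bullet> v)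
           \<le> v \<bullet> ((\<Sum>s\<in>{1..t}. outer (stack (pbar s \<omega> + (real s powr (-\<eta>)) *\<^sub>R u s \<omega>) (c s \<omega>))) *v v)"
          using main[OF t, of v] unfolding Q_def Wt_def \<alpha>_def .
      qed
    qed
  qed
qed

end
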